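(* Let $H$ be a real Hilbert space, $I=\{1,\dots,M\}$, let $f_i,h_i,T_i$ ($i\in I$) satisfy Assumption (A1)–(A4) and the parameters satisfy Condition (C) (described below). Consider the sequences generated by the Distributed Accelerated Incremental Algorithm below, and assume that for each $i\in I$ the sequence $\{y^{(i)}_n\}$ is bounded. Then: (a) $\lim_{n\to\infty}\frac{\|x_{n+1}-x_n\|}{\lambda_n}=\lim_{n\to\infty}\|x_{n+1}-x_n\|=0$; (b) for every $\bar x\in S$ and $i\in I$ there exist constants $Q_1,Q_2\ge0$ such that for all $n$, $$\|w^{(i+1)}_n-\bar x\|^2\le\|w^{(i)}_n-\bar x\|^2+\theta_nQ_1+\alpha_nQ_2-(1-\alpha_n)\|T_i(y^{(i)}_n)-y^{(i)}_n\|^2-\|z^{(i)}_n-y^{(i)}_n\|^2+2\lambda_n\big(f_i(\bar x)-f_i(y^{(i)}_n)\big)+2\lambda_n\langle d^{(i)}_{n+1},y^{(i)}_n-\bar x\rangle.$$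
   Context: Assumption (A1): each $f_i:H\to\mathbb{R}$ is continuous and convex. (A2): each $h_i:H\to\mathbb{R}$ is convex and Fréchet differentiable, and $\nabla h_i$ is $(1/L_i)$-Lipschitz continuous for some $L_i>0$. (A3): each $T_i:H\to H$ is firmly nonexpansive, i.e. $\|T_ix-T_iy\|^2\le\langle T_ix-T_iy,x-y\rangle$ for all $x,y$. (A4): $S=\bigcap_{i=1}^M\mathrm{Fix}\,T_i\neq\emptyset$ and, with $\psi=\sum_{i=1}^M(f_i+h_i)$, $\Omega=\{\hat x\in S:\psi(\hat x)=\min_{x\in S}\psi(x)\}\neq\emptyset$. Condition (C): $\{\theta_n\},\{\lambda_n\},\{\beta_n\},\{\alpha_n\}$ are decreasing real sequences converging to $0$ with $\theta_n\in[0,1)$, $\lambda_n\in(0,2\min_{i\in I}L_i]$, $\beta_n\in(0,1]$, $\alpha_n\in(0,1]$, and: (C1) $\sum_n\alpha_n=\infty$; (C2) $\lim_n\frac{1}{\alpha_{n+1}}\big|\frac{1}{\lambda_{n+1}}-\frac{1}{\lambda_n}\big|=0$; (C3) $\lim_n\frac{1}{\lambda_{n+1}}\big|1-\frac{\alpha_n}{\alpha_{n+1}}\big|=0$; (C4) $\lim_n\frac{\alpha_n}{\lambda_n}=0$; (C5) $\lim_n\frac{\theta_n}{\alpha_{n+1}\lambda_{n+1}}=0$; (C6) $\frac{\lambda_n}{\lambda_{n+1}}\le\sigma$ for some $\sigma\ge1$; (C7) $\lim_n\frac{\beta_n}{\alpha_{n+1}}=0$. $\mathrm{prox}_{\lambda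 g}(x)=\arg\min_y\{g(y)+\frac{1}{2\lambda}\|x-y\|^2\}$. Distributed Accelerated Incremental Algorithm: choose $x_1\in H$, $w^{(i)}_0,z^{(i)}_0,u^{(i)}\in H$ and set $d^{(i)}_1=-\nabla h_i(z^{(i)}_0)$ ($i\in I$). For $n=1,2,\dots$: set $w^{(1)}_n=x_n$; for $i=1,\dots,M$ compute $z^{(i)}_n=w^{(i)}_n+\theta_n(w^{(i)}_n-w^{(i)}_{n-1})$, $d^{(i)}_{n+1}=-\nabla h_i(z^{(i)}_n)+\beta_nd^{(i)}_n$, $y^{(i)}_n=\mathrm{prox}_{\lambda_nf_i}(z^{(i)}_n+\lambda_nd^{(i)}_{n+1})$, $w^{(i+1)}_n=\alpha_nu^{(i)}+(1-\alpha_n)T_i(y^{(i)}_n)$; then set $x_{n+1}=w^{(M+1)}_n$. *)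

theory Defs
  imports "HOL-Analysis.Analysis"
begin

text \<open>Proximal operator: prox_{lam g}(x) = argmin_y { g y + 1/(2 lam) ||x - y||^2 }.
  For g convex continuous and lam > 0 the minimiser exists and is unique.\<close>
definition prox :: "real \<Rightarrow> ('a::real_normed_vector \<Rightarrow> real) \<Rightarrow> 'a \<Rightarrow> 'a" where
  "prox lam g x = (SOME y. \<forall>v. g y + (1 / (2 * lam)) * (norm (x - y))\<^sup>2
                              \<le> g v + (1 / (2 * lam)) * (norm (x - v))\<^sup>2)"

definition firmly_nonexpansive :: "('a::real_inner \<Rightarrow> 'a) \<Rightarrow> bool" where
  "firmly_nonexpansive T \<longleftrightarrow> (\<forall>x y. (norm (T x - T y))\<^sup>2 \<le> inner (T x - T y) (x - y))"

definition Fix :: "('a \<Rightarrow> 'a) \<Rightarrow> 'a set" where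
  "Fix T = {x. T x = x}"

end

theory Submission
  imports Defs
begin



lemma fne_nonexp:
  fixes T :: "'a::real_inner \<Rightarrow> 'a"
  assumes "firmly_nonexpansive T"
  shows "norm (T p - T q) \<le> norm (p - q)"
proof -
  have "(norm (T p - T q))\<^sup>2 \<le> inner (T p - T q) (p - q)"
    using assms unfolding firmly_nonexpansive_def by blast
  also have "\<dots> \<le> norm (T p - T q) * norm (p - q)" by (rule norm_cauchy_schwarz)
  finally have "norm (T p - T q) * norm (T p - T q) \<le> norm (T p - T q) * norm (p - q)"
    by (simp add: power2_eq_square)
  then show ?thesis
    by (metis mult_le_cancel_left norm_ge_zero order_le_less)
qed

lemma fne_fix:
  fixes T :: "'a::real_inner \<Rightarrow> 'a"
  assumes "firmly_nonexpansive T" "T xb = xb"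
  shows "(norm (T p - xb))\<^sup>2 \<le> (norm (p - xb))\<^sup>2 - (norm (T p - p))\<^sup>2"
proof -
  have h: "(norm (T p - xb))\<^sup>2 \<le> inner (T p - xb) (p - xb)"
    using assms unfolding firmly_nonexpansive_def by (metis)
  have "T p - p = (T p - xb) - (p - xb)" by simp
  then have "(norm (T p - p))\<^sup>2 = (norm (T p - xb))\<^sup>2 - 2 * inner (T p - xb) (p - xb) + (norm (p - xb))\<^sup>2"
    by (simp add: power2_norm_eq_inner inner_diff_left inner_diff_right inner_commute)
  then show ?thesis using h by linarith
qed



lemma convex_lower_linear:
  fixes f :: "'a::real_normed_vector \<Rightarrow> real"
  assumes cont: "continuous_on UNIV f" and conv: "convex_on UNIV f"
  shows "\<exists>r>0. \<forall>v. f v \<ge> f a - 1 - norm (v - a) / r"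
proof -
  have "isCont f a" using cont continuous_on_eq_continuous_at by blast
  then obtain d where d: "d > 0" "\<And>x. norm (x - a) < d \<Longrightarrow> \<bar>f x - f a\<bar> < 1"
    unfolding continuous_at_real_range by (meson zero_less_one)
  define r where "r = d / 2"
  have r: "r > 0" "r < d" using d by (auto simp: r_def)
  have "f v \<ge> f a - 1 - norm (v - a) / r" for v
  proof (cases "norm (v - a) \<le> r")
    case True
    then have "\<bar>f v - f a\<bar> < 1" using d r by auto
    moreover have "norm (v - a) / r \<ge> 0" using r by simp
    ultimately show ?thesis by linarith
  next
    case False
    define s where "s = norm (v - a)"
    have s: "s > r" using False s_def by simp
    define t where "t = r / s"
    have t: "0 < t" "t < 1" using s r by (auto simp: t_def)
    define p where "p = (1 - t) *\<^sub>R a + t *\<^sub>R v"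
    have "p - a = t *\<^sub>R (v - a)" by (simp add: p_def algebra_simps)
    then have "norm (p - a) = t * s" using t by (simp add: s_def)
    also have "\<dots> = r" using s r by (simp add: t_def)
    finally have "norm (p - a) < d" using r by simp
    then have fp: "f p > f a - 1" using d by fastforce
    have "f p \<le> (1 - t) * f a + t * f v"
      using convex_onD[OF conv, of t a v] t by (simp add: p_def)
    then have "t * f v > t * f a - 1" using fp by (simp add: algebra_simps)
    then have "f v > f a - 1 / t" using t by (simp add: field_simps)
    moreover have "1 / t = norm (v - a) / r" using s r by (simp add: t_def s_def)
    moreover have "norm (v - a) / r \<ge> 0" using r by simp
    ultimately show ?thesis by linarith
  qed
  then show ?thesis using r by blast
qed

lemma parallelogram_mid:
  fixes X Y :: "'a::real_inner"
  shows "(norm ((1/2) *\<^sub>R (X + Y)))\<^sup>2 = (norm X)\<^sup>2 / 2 + (norm Y)\<^sup>2 / 2 - (norm (X - Y))\<^sup>2 / 4"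
  by (simp add: power2_norm_eq_inner inner_add_left inner_add_right inner_diff_left inner_diff_right inner_commute field_simps)

lemma lin_aux: "(t1::real) \<le> t2/2 + t3/2 - Q \<Longrightarrow> m \<le> t1 \<Longrightarrow> t2 < m + a \<Longrightarrow> t3 < m + b \<Longrightarrow> Q < a/2 + b/2"
  by linarith

lemma lin_aux2: "(Q::real) < a/2 + b/2 \<Longrightarrow> a \<le> i \<Longrightarrow> b \<le> i \<Longrightarrow> i < R \<Longrightarrow> Q < R"
  by linarith

lemma prox_exists:
  fixes f :: "'a::{real_inner,complete_space} \<Rightarrow> real"
  assumes cont: "continuous_on UNIV f" and conv: "convex_on UNIV f" and lam: "lam > 0"
  shows "\<exists>y. \<forall>v. f y + (1 / (2 * lam)) * (norm (a - y))\<^sup>2 \<le> f v + (1 / (2 * lam)) * (norm (a - v))\<^sup>2"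
proof -
  define c where "c = 1 / (2 * lam)"
  have c: "c > 0" using lam by (simp add: c_def)
  define g where "g v = f v + c * (norm (a - v))\<^sup>2" for v
  obtain r where r: "r > 0" "\<And>v. f v \<ge> f a - 1 - norm (v - a) / r"
    using convex_lower_linear[OF cont conv] by blast
  define m0 where "m0 = f a - 1 - 1 / (4 * c * r\<^sup>2)"
  have lb: "g v \<ge> m0" for v
  proof -
    define s where "s = norm (a - v)"
    have "c * s\<^sup>2 - s / r + 1 / (4 * c * r\<^sup>2) = c * (s - 1 / (2 * c * r))\<^sup>2"
      using c r by (simp add: power2_eq_square field_simps)
    also have "\<dots> \<ge> 0" using c by simp
    finally have "c * s\<^sup>2 - s / r + 1 / (4 * c * r\<^sup>2) \<ge> 0" .
    moreover have "f v \<ge> f a - 1 - s / r" using r(2)[of v] by (simp add: s_def norm_minus_commute)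
    ultimately show ?thesis by (simp add: g_def m0_def s_def)
  qed
  define m where "m = Inf (range g)"
  have bdd: "bdd_below (range g)" unfolding bdd_below_def using lb by auto
  have mle: "m \<le> g v" for v unfolding m_def using bdd by (simp add: cInf_lower)
  have "\<exists>v. g v < m + 1 / (real k + 1)" for k :: nat
  proof -
    have "Inf (range g) < m + 1 / (real k + 1)" by (simp add: m_def)
    from cInf_lessD[OF _ this] show ?thesis by auto
  qed
  then obtain vs where vs: "\<And>k. g (vs k) < m + 1 / (real k + 1)" by metis
  have mid: "c / 4 * (norm (vs j - vs k))\<^sup>2 < 1 / (real j + 1) / 2 + 1 / (real k + 1) / 2" for j k
  proof -
    define p where "p = (1/2) *\<^sub>R (vs j + vs k)"
    have "p = (1/2) *\<^sub>R vs j + (1/2) *\<^sub>R vs k" by (simp add: p_def scaleR_right_distrib)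
    then have fp: "f p \<le> (1/2) * f (vs j) + (1/2) * f (vs k)"
      using convex_onD[OF conv, of "1/2" "vs j" "vs k"] by (simp add: p_def)
    moreover have "a = (1/2) *\<^sub>R a + (1/2) *\<^sub>R a" by (simp flip: scaleR_add_left)
    then have "a - p = (1/2) *\<^sub>R ((a - vs j) + (a - vs k))" unfolding p_def by (simp add: algebra_simps)
    then have E: "(norm (a - p))\<^sup>2 = (norm (a - vs j))\<^sup>2 / 2 + (norm (a - vs k))\<^sup>2 / 2 - (norm (vs j - vs k))\<^sup>2 / 4"
      using parallelogram_mid[of "a - vs j" "a - vs k"] by (simp add: norm_minus_commute)
    have "c * (norm (a - p))\<^sup>2 = c * (norm (a - vs j))\<^sup>2 / 2 + c * (norm (a - vs k))\<^sup>2 / 2 - c / 4 * (norm (vs j - vs k))\<^sup>2"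
      unfolding E by (simp add: algebra_simps)
    with fp have "g p \<le> g (vs j) / 2 + g (vs k) / 2 - c / 4 * (norm (vs j - vs k))\<^sup>2"
      unfolding g_def by (simp add: field_simps)
    moreover have "m \<le> g p" by (rule mle)
    ultimately show ?thesis using vs[of j] vs[of k] lin_aux by blast
  qed
  have cauchy: "Cauchy vs"
    unfolding Cauchy_def
  proof (intro allI impI)
    fix e :: real assume e: "e > 0"
    have "c * e\<^sup>2 / 4 > 0" using c e by simp
    then obtain N :: nat where N: "N > 0" "inverse (real N) < c * e\<^sup>2 / 4"
      using ex_inverse_of_nat_less by blast
    show "\<exists>M. \<forall>m\<ge>M. \<forall>n\<ge>M. dist (vs m) (vs n) < e"
    proof (intro exI allI impI)
      fix j k assume jk: "N \<le> j" "N \<le> k"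
      have j1: "1 / (real j + 1) \<le> inverse (real N)" using jk N by (simp add: field_simps)
      have k1: "1 / (real k + 1) \<le> inverse (real N)" using jk N by (simp add: field_simps)
      have "c / 4 * (norm (vs j - vs k))\<^sup>2 < c * e\<^sup>2 / 4" by (rule lin_aux2[OF mid[of j k] j1 k1 N(2)])
      then have "(norm (vs j - vs k))\<^sup>2 < e\<^sup>2" using c by (simp add: field_simps)
      then have "norm (vs j - vs k) < e" using e by (smt (verit) power_mono norm_ge_zero)
      then show "dist (vs j) (vs k) < e" by (simp add: dist_norm)
    qed
  qed
  then obtain y where y: "vs \<longlonglongrightarrow> y" using Cauchy_convergent convergent_def by blast
  have gcont: "continuous_on UNIV g" unfolding g_def
    by (intro continuous_intros cont)
  have "(\<lambda>k. g (vs k)) \<longlonglongrightarrow> g y"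
  proof -
    have "isCont g y" using gcont continuous_on_eq_continuous_at by blast
    then show ?thesis using y by (rule isCont_tendsto_compose)
  qed
  moreover have "(\<lambda>k. m + 1 / (real k + 1)) \<longlonglongrightarrow> m + 0"
  proof (intro tendsto_add tendsto_const)
    show "(\<lambda>k. 1 / (real k + 1)) \<longlonglongrightarrow> 0"
      using LIMSEQ_inverse_real_of_nat by (simp add: inverse_eq_divide add.commute)
  qed
  ultimately have "g y \<le> m + 0"
    by (rule LIMSEQ_le) (use vs less_imp_le in blast)
  then have "\<forall>v. g y \<le> g v" using mle by (smt (verit))
  then show ?thesis unfolding g_def c_def by blast
qed



lemma line_deriv:
  fixes h :: "'a::real_inner \<Rightarrow> real"
  assumes der: "\<And>p. (h has_derivative (\<lambda>v. inner (G p) v)) (at p)"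
  shows "((\<lambda>t. h (p + t *\<^sub>R v)) has_real_derivative inner (G (p + t *\<^sub>R v)) v) (at t)"
proof -
  have l: "((\<lambda>t. p + t *\<^sub>R v) has_derivative (\<lambda>s. s *\<^sub>R v)) (at t)"
    by (auto intro!: derivative_eq_intros)
  have "((h \<circ> (\<lambda>t. p + t *\<^sub>R v)) has_derivative ((\<lambda>w. inner (G (p + t *\<^sub>R v)) w) \<circ> (\<lambda>s. s *\<^sub>R v))) (at t)"
    by (rule diff_chain_at[OF l der])
  moreover have "((\<lambda>w. inner (G (p + t *\<^sub>R v)) w) \<circ> (\<lambda>s. s *\<^sub>R v)) = (*) (inner (G (p + t *\<^sub>R v)) v)"
    by (rule ext) (simp add: mult.commute)
  ultimately show ?thesis by (simp add: has_field_derivative_def o_def)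
qed

lemma grad_tangent:
  fixes h :: "'a::real_inner \<Rightarrow> real"
  assumes conv: "convex_on UNIV h"
    and der: "\<And>p. (h has_derivative (\<lambda>v. inner (G p) v)) (at p)"
  shows "h q \<ge> h p + inner (G p) (q - p)"
proof -
  define v where "v = q - p"
  define \<phi> where "\<phi> t = h (p + t *\<^sub>R v)" for t :: real
  have cphi: "convex_on UNIV \<phi>"
    unfolding convex_on_def
  proof (intro conjI ballI allI impI convex_UNIV)
    fix x y u w :: real assume uw: "u \<ge> 0" "w \<ge> 0" "u + w = 1"
    have "p + (u * x + w * y) *\<^sub>R v = u *\<^sub>R (p + x *\<^sub>R v) + w *\<^sub>R (p + y *\<^sub>R v)"
    proof -
      have "p = u *\<^sub>R p + w *\<^sub>R p" using uw by (simp flip: scaleR_add_left)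
      then show ?thesis by (simp add: algebra_simps)
    qed
    then show "\<phi> (u *\<^sub>R x + w *\<^sub>R y) \<le> u * \<phi> x + w * \<phi> y"
      using convex_onD[OF conv, of w "p + x *\<^sub>R v" "p + y *\<^sub>R v"] uw
      by (simp add: \<phi>_def) (smt (verit))
  qed
  have d: "(\<phi> has_field_derivative inner (G p) v) (at 0 within UNIV)"
    using line_deriv[OF der, of p v 0] by (simp add: \<phi>_def[abs_def])
  have "\<phi> 1 - \<phi> 0 \<ge> inner (G p) v * (1 - 0)"
    by (rule convex_on_imp_above_tangent[OF cphi _ _ _ d]) auto
  then show ?thesis by (simp add: \<phi>_def v_def)
qed

lemma descent:
  fixes h :: "'a::real_inner \<Rightarrow> real"
  assumes der: "\<And>p. (h has_derivative (\<lambda>v. inner (G p) v)) (at p)"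
    and L: "L > 0"
    and lip: "\<And>p q. norm (G p - G q) \<le> (1 / L) * norm (p - q)"
  shows "h q \<le> h p + inner (G p) (q - p) + (norm (q - p))\<^sup>2 / (2 * L)"
proof -
  define v where "v = q - p"
  define \<psi> where "\<psi> t = h (p + t *\<^sub>R v) - t * inner (G p) v - t\<^sup>2 * (norm v)\<^sup>2 / (2 * L)" for t :: real
  have "\<psi> 0 \<ge> \<psi> 1"
  proof (rule DERIV_nonpos_imp_nonincreasing[of 0 1])
    fix t :: real assume t: "0 \<le> t" "t \<le> 1"
    have D: "(\<psi> has_real_derivative (inner (G (p + t *\<^sub>R v)) v - inner (G p) v - (2 * t) * (norm v)\<^sup>2 / (2 * L))) (at t)"
      unfolding \<psi>_def using L
      by (auto intro!: derivative_eq_intros line_deriv[OF der] simp: power2_eq_square)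
    have "inner (G (p + t *\<^sub>R v)) v - inner (G p) v = inner (G (p + t *\<^sub>R v) - G p) v"
      by (simp add: inner_diff_left)
    also have "\<dots> \<le> norm (G (p + t *\<^sub>R v) - G p) * norm v" by (rule norm_cauchy_schwarz)
    also have "\<dots> \<le> ((1 / L) * norm (t *\<^sub>R v)) * norm v"
      by (rule mult_right_mono) (use lip[of "p + t *\<^sub>R v" p] in simp_all)
    also have "\<dots> = (2 * t) * (norm v)\<^sup>2 / (2 * L)" using t L by (simp add: power2_eq_square)
    finally show "\<exists>y. DERIV \<psi> t :> y \<and> y \<le> 0" using D by (intro exI[of _ _]) (auto)
  qed simp
  then show ?thesis by (simp add: \<psi>_def v_def)
qed

lemma cocoercive:
  fixes h :: "'a::real_inner \<Rightarrow> real"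
  assumes conv: "convex_on UNIV h"
    and der: "\<And>p. (h has_derivative (\<lambda>v. inner (G p) v)) (at p)"
    and L: "L > 0"
    and lip: "\<And>p q. norm (G p - G q) \<le> (1 / L) * norm (p - q)"
  shows "h q - h p - inner (G p) (q - p) \<ge> (L / 2) * (norm (G q - G p))\<^sup>2"
proof -
  define g where "g = G q - G p"
  define r where "r = q - L *\<^sub>R g"
  have d: "h r \<le> h q + inner (G q) (r - q) + (norm (r - q))\<^sup>2 / (2 * L)"
    by (rule descent[OF der L lip])
  have t: "h r \<ge> h p + inner (G p) (r - p)" by (rule grad_tangent[OF conv der])
  have e1: "r - q = - (L *\<^sub>R g)" by (simp add: r_def)
  have e2: "r - p = (q - p) - L *\<^sub>R g" by (simp add: r_def)
  have n: "(norm (r - q))\<^sup>2 / (2 * L) = (L / 2) * (norm g)\<^sup>2"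
    using L by (simp add: e1 power2_eq_square)
  have i1: "inner (G q) (r - q) = - L * inner (G q) g" by (simp add: e1)
  have i2: "inner (G p) (r - p) = inner (G p) (q - p) - L * inner (G p) g" by (simp add: e2 inner_diff_right)
  have gg: "inner (G q) g - inner (G p) g = (norm g)\<^sup>2"
    by (simp add: g_def power2_norm_eq_inner inner_diff_left)
  have "h p + inner (G p) (q - p) - L * inner (G p) g \<le> h q - L * inner (G q) g + (L / 2) * (norm g)\<^sup>2"
    using d t n i1 i2 by linarith
  moreover have "L * inner (G q) g - L * inner (G p) g = L * (norm g)\<^sup>2"
    using gg by (metis right_diff_distrib)
  ultimately have "h q - h p - inner (G p) (q - p) \<ge> (L / 2) * (norm g)\<^sup>2"
    by (simp add: field_simps)
  then show ?thesis by (simp add: g_def)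
qed

lemma norm_sq_diff_scale:
  fixes X Y :: "'a::real_inner"
  shows "(norm (X - lam *\<^sub>R Y))\<^sup>2 = (norm X)\<^sup>2 - 2 * lam * inner Y X + lam\<^sup>2 * (norm Y)\<^sup>2"
  unfolding power2_norm_eq_inner by (simp add: power2_norm_eq_inner inner_diff_left inner_diff_right inner_commute power2_eq_square algebra_simps)

lemma grad_step_nonexp:
  fixes h :: "'a::real_inner \<Rightarrow> real"
  assumes conv: "convex_on UNIV h"
    and der: "\<And>p. (h has_derivative (\<lambda>v. inner (G p) v)) (at p)"
    and L: "L > 0"
    and lip: "\<And>p q. norm (G p - G q) \<le> (1 / L) * norm (p - q)"
    and lam: "0 < lam" "lam \<le> 2 * L"
  shows "norm ((p - lam *\<^sub>R G p) - (q - lam *\<^sub>R G q)) \<le> norm (p - q)"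
proof -
  have c1: "h q - h p - inner (G p) (q - p) \<ge> (L / 2) * (norm (G q - G p))\<^sup>2"
    by (rule cocoercive[OF conv der L lip])
  have c2: "h p - h q - inner (G q) (p - q) \<ge> (L / 2) * (norm (G p - G q))\<^sup>2"
    by (rule cocoercive[OF conv der L lip])
  have nc: "norm (G q - G p) = norm (G p - G q)" by (rule norm_minus_commute)
  have coc: "inner (G p - G q) (p - q) \<ge> L * (norm (G p - G q))\<^sup>2"
  proof -
    have "inner (G p - G q) (p - q) = - inner (G p) (q - p) - inner (G q) (p - q)"
      by (simp add: inner_diff_left inner_diff_right)
    then show ?thesis using c1 c2 nc by (simp add: algebra_simps)
  qed
  define N where "N = (norm (G p - G q))\<^sup>2"
  have eq: "(p - lam *\<^sub>R G p) - (q - lam *\<^sub>R G q) = (p - q) - lam *\<^sub>R (G p - G q)" by (simp add: algebra_simps)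
  have "(norm ((p - lam *\<^sub>R G p) - (q - lam *\<^sub>R G q)))\<^sup>2
      = (norm (p - q))\<^sup>2 - 2 * lam * inner (G p - G q) (p - q) + lam\<^sup>2 * N"
    unfolding eq N_def by (rule norm_sq_diff_scale)
  also have "\<dots> \<le> (norm (p - q))\<^sup>2 - 2 * lam * (L * N) + lam\<^sup>2 * N"
    using coc lam by (simp add: N_def)
  also have "\<dots> = (norm (p - q))\<^sup>2 - lam * (2 * L - lam) * N" by (simp add: algebra_simps power2_eq_square)
  also have "\<dots> \<le> (norm (p - q))\<^sup>2" using lam by (simp add: N_def)
  finally show ?thesis by (simp add: power2_le_iff_abs_le)
qed



lemma prox_vi:
  fixes f :: "'a::real_inner \<Rightarrow> real"
  assumes conv: "convex_on UNIV f" and lam: "lam > 0"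
    and min: "\<forall>v. f y + (1 / (2 * lam)) * (norm (a - y))\<^sup>2 \<le> f v + (1 / (2 * lam)) * (norm (a - v))\<^sup>2"
  shows "inner (a - y) (v - y) \<le> lam * (f v - f y)"
proof (rule field_le_epsilon)
  fix e :: real assume e: "e > 0"
  define N where "N = (norm (v - y))\<^sup>2"
  define t where "t = min 1 (e / (N + 1))"
  have N0: "N \<ge> 0" by (simp add: N_def)
  have t: "0 < t" "t \<le> 1" using e N0 by (auto simp: t_def)
  have tN: "t * N \<le> e"
  proof -
    have "t \<le> e / (N + 1)" by (simp add: t_def)
    then have "t * N \<le> e / (N + 1) * N" using N0 by (rule mult_right_mono)
    also have "\<dots> \<le> e" using e N0 by (simp add: field_simps)
    finally show ?thesis .
  qed
  define q where "q = (1 - t) *\<^sub>R y + t *\<^sub>R v"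
  have fq: "f q \<le> (1 - t) * f y + t * f v" using convex_onD[OF conv, of t y v] t by (simp add: q_def)
  have aq: "a - q = (a - y) - t *\<^sub>R (v - y)" by (simp add: q_def algebra_simps)
  have nq: "(norm (a - q))\<^sup>2 = (norm (a - y))\<^sup>2 - 2 * t * inner (v - y) (a - y) + t\<^sup>2 * N"
    unfolding aq N_def by (rule norm_sq_diff_scale)
  define c where "c = 1 / (2 * lam)"
  have c: "c > 0" using lam by (simp add: c_def)
  have "f y + c * (norm (a - y))\<^sup>2 \<le> f q + c * (norm (a - q))\<^sup>2" using min by (simp add: c_def)
  then have "f y + c * (norm (a - y))\<^sup>2 \<le> (1 - t) * f y + t * f v + c * ((norm (a - y))\<^sup>2 - 2 * t * inner (v - y) (a - y) + t\<^sup>2 * N)"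
    using fq nq by (smt (verit) c mult_left_mono)
  then have "t * (2 * c * inner (v - y) (a - y)) \<le> t * ((f v - f y) + c * t * N)"
    by (simp add: algebra_simps power2_eq_square)
  then have "2 * c * inner (v - y) (a - y) \<le> (f v - f y) + c * t * N" using t by simp
  then have "lam * (2 * c * inner (v - y) (a - y)) \<le> lam * ((f v - f y) + c * t * N)" using lam by simp
  then have "inner (v - y) (a - y) \<le> lam * (f v - f y) + t * N / 2" using lam by (simp add: c_def algebra_simps)
  then show "inner (a - y) (v - y) \<le> lam * (f v - f y) + e" using tN e by (simp add: inner_commute)
qed

lemma prox_pair:
  fixes f :: "'a::real_inner \<Rightarrow> real"
  assumes l1: "lam1 > 0" and l2: "lam2 > 0"
    and v1: "inner (a1 - y1) (y2 - y1) \<le> lam1 * (f y2 - f y1)"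
    and v2: "inner (a2 - y2) (y1 - y2) \<le> lam2 * (f y1 - f y2)"
  shows "norm (y1 - y2) \<le> norm (a1 - a2) + \<bar>lam2 / lam1 - 1\<bar> * norm (a1 - y1)"
proof -
  define r where "r = lam2 / lam1"
  have r: "r > 0" using l1 l2 by (simp add: r_def)
  have "r * inner (a1 - y1) (y2 - y1) \<le> r * (lam1 * (f y2 - f y1))" using v1 r by simp
  also have "r * (lam1 * (f y2 - f y1)) = lam2 * (f y2 - f y1)" using l1 by (simp add: r_def)
  finally have "r * inner (a1 - y1) (y2 - y1) + inner (a2 - y2) (y1 - y2) \<le> 0" using v2 by (simp add: algebra_simps)
  define D where "D = y1 - y2"
  define E where "E = (a1 - a2) + (r - 1) *\<^sub>R (a1 - y1)"
  have "r *\<^sub>R (a1 - y1) - (a2 - y2) = E - D" by (simp add: E_def D_def algebra_simps)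
  have key: "inner (r *\<^sub>R (a1 - y1) - (a2 - y2)) D \<ge> 0"
    using \<open>r * inner (a1 - y1) (y2 - y1) + inner (a2 - y2) (y1 - y2) \<le> 0\<close>
    by (simp add: D_def inner_diff_left inner_diff_right algebra_simps)
  then have "inner (E - D) D \<ge> 0" using \<open>r *\<^sub>R (a1 - y1) - (a2 - y2) = E - D\<close> by simp
  then have "(norm D)\<^sup>2 \<le> inner E D" by (simp add: inner_diff_left power2_norm_eq_inner)
  also have "\<dots> \<le> norm E * norm D" by (rule norm_cauchy_schwarz)
  finally have "norm D \<le> norm E"
    by (metis mult_le_cancel_right norm_ge_zero not_le order_le_less power2_eq_square mult_zero_right mult_le_cancel_left_pos)
  also have "norm E \<le> norm (a1 - a2) + norm ((r - 1) *\<^sub>R (a1 - y1))" unfolding E_def by (rule norm_triangle_ineq)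
  finally show ?thesis by (simp add: D_def r_def)
qed



lemma xu:
  fixes c a g :: "nat \<Rightarrow> real"
  assumes a: "\<And>n. n \<ge> N \<Longrightarrow> 0 < a n \<and> a n \<le> 1"
    and ns: "\<not> summable a"
    and g: "g \<longlonglongrightarrow> 0"
    and c0: "\<And>n. c n \<ge> 0"
    and rec: "\<And>n. n \<ge> N \<Longrightarrow> c (Suc n) \<le> (1 - a n) * c n + a n * g n"
  shows "c \<longlonglongrightarrow> 0"
proof (rule LIMSEQ_I)
  fix \<epsilon> :: real assume \<epsilon>: "\<epsilon> > 0"
  define e where "e = \<epsilon> / 2"
  have e: "e > 0" using \<epsilon> by (simp add: e_def)
  obtain N0 where N0: "\<And>n. n \<ge> N0 \<Longrightarrow> norm (g n - 0) < e" using LIMSEQ_D[OF g e] by blast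
  define N1 where "N1 = max N N0"
  have gN: "g n \<le> e" if "n \<ge> N1" for n using N0[of n] that by (auto simp: N1_def)
  define p where "p n = max (c n - e) 0" for n
  have p0: "p n \<ge> 0" for n by (simp add: p_def)
  have pstep: "p (Suc n) \<le> (1 - a n) * p n" if n: "n \<ge> N1" for n
  proof -
    have an: "0 < a n" "a n \<le> 1" using a[of n] n by (auto simp: N1_def)
    have "c (Suc n) \<le> (1 - a n) * c n + a n * g n" using rec[of n] n by (simp add: N1_def)
    also have "\<dots> \<le> (1 - a n) * c n + a n * e" using gN[OF n] an by (simp add: mult_left_mono)
    finally have "c (Suc n) - e \<le> (1 - a n) * (c n - e)" by (simp add: algebra_simps)
    also have "\<dots> \<le> (1 - a n) * p n" using an by (intro mult_left_mono) (auto simp: p_def)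
    finally have "c (Suc n) - e \<le> (1 - a n) * p n" .
    moreover have "0 \<le> (1 - a n) * p n" using an p0[of n] by simp
    ultimately show ?thesis by (simp add: p_def)
  qed
  have pdec: "p (Suc n) \<le> p n" if "n \<ge> N1" for n
  proof -
    have "0 < a n" "a n \<le> 1" using a[of n] that by (auto simp: N1_def)
    then have "(1 - a n) * p n \<le> p n" using p0[of n] by (simp add: mult_left_le_one_le)
    then show ?thesis using pstep[OF that] by linarith
  qed
  have pexp: "p (N1 + k) \<le> exp (- (\<Sum>j<k. a (N1 + j))) * p N1" for k
  proof (induction k)
    case 0 then show ?case by simp
  next
    case (Suc k)
    have "p (N1 + Suc k) \<le> (1 - a (N1 + k)) * p (N1 + k)" using pstep[of "N1 + k"] by simp
    also have "\<dots> \<le> exp (- a (N1 + k)) * p (N1 + k)"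
      using p0 by (intro mult_right_mono) (auto simp: exp_ge_add_one_self[of "- a (N1 + k)", simplified])
    also have "\<dots> \<le> exp (- a (N1 + k)) * (exp (- (\<Sum>j<k. a (N1 + j))) * p N1)"
      using Suc.IH by (intro mult_left_mono) auto
    also have "\<dots> = exp (- (\<Sum>j<Suc k. a (N1 + j))) * p N1"
      by (simp add: exp_add[symmetric] algebra_simps)
    finally show ?case .
  qed
  have "\<exists>k. p (N1 + k) < e"
  proof (rule ccontr)
    assume "\<not> ?thesis"
    then have big: "p (N1 + k) \<ge> e" for k by (simp add: not_less)
    have pN: "p N1 > 0" using big[of 0] e by simp
    have "summable (\<lambda>j. a (j + N1))"
    proof (rule summableI_nonneg_bounded)
      fix j show "0 \<le> a (j + N1)" using a[of "j + N1"] by (force simp: N1_def)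
    next
      fix k
      have "e \<le> exp (- (\<Sum>j<k. a (N1 + j))) * p N1" using big[of k] pexp[of k] by linarith
      then have "e / p N1 \<le> exp (- (\<Sum>j<k. a (N1 + j)))" using pN by (simp add: field_simps)
      then have "ln (e / p N1) \<le> - (\<Sum>j<k. a (N1 + j))" using e pN
        by (metis divide_pos_pos ln_exp ln_le_cancel_iff exp_gt_zero)
      then show "(\<Sum>i<k. a (i + N1)) \<le> - ln (e / p N1)" by (simp add: add.commute)
    qed
    then have "summable a" by (simp add: summable_iff_shift)
    with ns show False by simp
  qed
  then obtain k where k: "p (N1 + k) < e" by blast
  have "p (N1 + k + m) \<le> p (N1 + k)" for m
  proof (induction m)
    case 0 then show ?case by simp
  next
    case (Suc m) then show ?case using pdec[of "N1 + k + m"] by simp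
  qed
  then have "\<forall>n\<ge>N1 + k. norm (c n - 0) < \<epsilon>"
  proof (intro allI impI)
    fix n assume "n \<ge> N1 + k"
    then obtain m where "n = N1 + k + m" using le_Suc_ex by blast
    then have "p n < e" using k \<open>\<And>m. p (N1 + k + m) \<le> p (N1 + k)\<close> by (metis order.strict_trans1)
    then have "c n < 2 * e" by (simp add: p_def)
    then show "norm (c n - 0) < \<epsilon>" using c0[of n] by (simp add: e_def)
  qed
  then show "\<exists>no. \<forall>n\<ge>no. norm (c n - 0) < \<epsilon>" by blast
qed



lemma polar2:
  fixes X Y :: "'a::real_inner"
  shows "2 * inner X Y = (norm X)\<^sup>2 + (norm Y)\<^sup>2 - (norm (X - Y))\<^sup>2"
  unfolding power2_norm_eq_inner by (simp add: inner_diff_left inner_diff_right inner_commute)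

lemma norm_sq_add_scale:
  fixes X Y :: "'a::real_inner"
  shows "(norm (X + t *\<^sub>R Y))\<^sup>2 = (norm X)\<^sup>2 + 2 * t * inner X Y + t\<^sup>2 * (norm Y)\<^sup>2"
  unfolding power2_norm_eq_inner by (simp add: inner_add_left inner_add_right inner_commute power2_eq_square algebra_simps)

lemma norm_sq_convex:
  fixes X Y :: "'a::real_inner"
  assumes "0 \<le> a" "a \<le> 1"
  shows "(norm (a *\<^sub>R X + (1 - a) *\<^sub>R Y))\<^sup>2 \<le> a * (norm X)\<^sup>2 + (1 - a) * (norm Y)\<^sup>2"
proof -
  have "(norm (a *\<^sub>R X + (1 - a) *\<^sub>R Y))\<^sup>2 = a * (norm X)\<^sup>2 + (1 - a) * (norm Y)\<^sup>2 - a * (1 - a) * (norm (X - Y))\<^sup>2"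
    unfolding power2_norm_eq_inner
    by (simp add: inner_add_left inner_add_right inner_diff_left inner_diff_right inner_commute power2_eq_square algebra_simps)
  moreover have "a * (1 - a) * (norm (X - Y))\<^sup>2 \<ge> 0" using assms by simp
  ultimately show ?thesis by linarith
qed


lemma tri3:
  fixes a b c d :: "'a::real_normed_vector"
  shows "norm (a + (b + (c - d))) \<le> norm a + (norm b + (norm c + norm d))"
proof -
  have "norm (a + (b + (c - d))) \<le> norm a + norm (b + (c - d))" by (rule norm_triangle_ineq)
  also have "norm (b + (c - d)) \<le> norm b + norm (c - d)" by (rule norm_triangle_ineq)
  also have "norm (c - d) \<le> norm c + norm d" by (rule norm_triangle_ineq4)
  finally show ?thesis by simp
qed

lemma tri2:
  fixes a b c :: "'a::real_normed_vector"
  shows "norm (a + (b - c)) \<le> norm a + (norm b + norm c)"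
proof -
  have "norm (a + (b - c)) \<le> norm a + norm (b - c)" by (rule norm_triangle_ineq)
  also have "norm (b - c) \<le> norm b + norm c" by (rule norm_triangle_ineq4)
  finally show ?thesis by simp
qed

lemma tri2':
  fixes a b c :: "'a::real_normed_vector"
  shows "norm (a + b - c) \<le> norm a + norm b + norm c"
proof -
  have "norm (a + b - c) \<le> norm (a + b) + norm c" by (rule norm_triangle_ineq4)
  also have "norm (a + b) \<le> norm a + norm b" by (rule norm_triangle_ineq)
  finally show ?thesis by simp
qed


lemma u1: fixes l1 a1 a0 :: real shows "l1 > 0 \<Longrightarrow> a1 > 0 \<Longrightarrow> \<bar>a1 - a0\<bar> / (l1 * a1) = (1 / l1) * \<bar>1 - a0 / a1\<bar>"
proof -
  assume h: "l1 > 0" "a1 > 0"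
  have "1 - a0 / a1 = (a1 - a0) / a1" using h by (simp add: field_simps)
  then have "\<bar>1 - a0 / a1\<bar> = \<bar>a1 - a0\<bar> / a1" using h by (simp add: abs_divide)
  then show ?thesis using h by simp
qed
lemma u2: fixes l1 l0 a1 :: real shows "l1 > 0 \<Longrightarrow> l0 > 0 \<Longrightarrow> a1 > 0 \<Longrightarrow> \<bar>l0 / l1 - 1\<bar> / (l1 * a1) = (l0 / l1) * ((1 / a1) * \<bar>1 / l1 - 1 / l0\<bar>)"
proof -
  assume h: "l1 > 0" "l0 > 0" "a1 > 0"
  have "l0 / l1 - 1 = l0 * (1 / l1 - 1 / l0)" using h by (simp add: field_simps)
  then have "\<bar>l0 / l1 - 1\<bar> = l0 * \<bar>1 / l1 - 1 / l0\<bar>" using h by (simp add: abs_mult)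
  then show ?thesis using h by simp
qed
lemma u5: fixes l1 l0 a1 :: real shows "l1 > 0 \<Longrightarrow> l0 > 0 \<Longrightarrow> a1 > 0 \<Longrightarrow> \<bar>l1 - l0\<bar> / (l1 * a1) = l0 * ((1 / a1) * \<bar>1 / l1 - 1 / l0\<bar>)"
proof -
  assume h: "l1 > 0" "l0 > 0" "a1 > 0"
  have "l1 - l0 = - (l0 * l1) * (1 / l1 - 1 / l0)" using h by (simp add: field_simps)
  then have "\<bar>l1 - l0\<bar> = (l0 * l1) * \<bar>1 / l1 - 1 / l0\<bar>" using h by (simp add: abs_mult)
  then show ?thesis using h by simp
qed
lemma u6: fixes l1 l0 a1 b :: real shows "l0 * b / (l1 * a1) = (l0 / l1) * (b / a1)"
  by simp




theorem lemma3:
  fixes M :: nat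
    and f h :: "nat \<Rightarrow> 'a::{real_inner,complete_space} \<Rightarrow> real"
    and gh :: "nat \<Rightarrow> 'a \<Rightarrow> 'a"
    and L :: "nat \<Rightarrow> real"
    and T :: "nat \<Rightarrow> 'a \<Rightarrow> 'a"
    and \<theta> lam \<beta> \<alpha> :: "nat \<Rightarrow> real"
    and x :: "nat \<Rightarrow> 'a"
    and w z d y :: "nat \<Rightarrow> nat \<Rightarrow> 'a"
    and u :: "nat \<Rightarrow> 'a"
    and S :: "'a set"
  assumes M: "M \<ge> 1"
    (* (A1) *)
    and A1_cont: "\<And>i. i \<in> {1..M} \<Longrightarrow> continuous_on UNIV (f i)"
    and A1_conv: "\<And>i. i \<in> {1..M} \<Longrightarrow> convex_on UNIV (f i)"
    (* (A2) *)
    and A2_conv: "\<And>i. i \<in> {1..M} \<Longrightarrow> convex_on UNIV (h i)"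
    and A2_grad: "\<And>i p. i \<in> {1..M} \<Longrightarrow> (h i has_derivative (\<lambda>v. inner (gh i p) v)) (at p)"
    and A2_L: "\<And>i. i \<in> {1..M} \<Longrightarrow> L i > 0"
    and A2_lip: "\<And>i p q. i \<in> {1..M} \<Longrightarrow> norm (gh i p - gh i q) \<le> (1 / L i) * norm (p - q)"
    (* (A3) *)
    and A3: "\<And>i. i \<in> {1..M} \<Longrightarrow> firmly_nonexpansive (T i)"
    (* (A4) *)
    and S_def: "S = (\<Inter>i\<in>{1..M}. Fix (T i))"
    and S_ne: "S \<noteq> {}"
    and Omega_ne: "\<exists>xh\<in>S. \<forall>v\<in>S. (\<Sum>i\<in>{1..M}. f i xh + h i xh) \<le> (\<Sum>i\<in>{1..M}. f i v + h i v)"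
    (* Condition (C) *)
    and dec_\<theta>: "\<And>n. n \<ge> 1 \<Longrightarrow> \<theta> (Suc n) \<le> \<theta> n"
    and dec_lam: "\<And>n. n \<ge> 1 \<Longrightarrow> lam (Suc n) \<le> lam n"
    and dec_\<beta>: "\<And>n. n \<ge> 1 \<Longrightarrow> \<beta> (Suc n) \<le> \<beta> n"
    and dec_\<alpha>: "\<And>n. n \<ge> 1 \<Longrightarrow> \<alpha> (Suc n) \<le> \<alpha> n"
    and lim_\<theta>: "\<theta> \<longlonglongrightarrow> 0" and lim_lam: "lam \<longlonglongrightarrow> 0"
    and lim_\<beta>: "\<beta> \<longlonglongrightarrow> 0" and lim_\<alpha>: "\<alpha> \<longlonglongrightarrow> 0"
    and rng_\<theta>: "\<And>n. n \<ge> 1 \<Longrightarrow> 0 \<le> \<theta> n \<and> \<theta> n < 1"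
    and rng_lam: "\<And>n. n \<ge> 1 \<Longrightarrow> 0 < lam n \<and> lam n \<le> 2 * Min (L ` {1..M})"
    and rng_\<beta>: "\<And>n. n \<ge> 1 \<Longrightarrow> 0 < \<beta> n \<and> \<beta> n \<le> 1"
    and rng_\<alpha>: "\<And>n. n \<ge> 1 \<Longrightarrow> 0 < \<alpha> n \<and> \<alpha> n \<le> 1"
    and C1: "\<not> summable \<alpha>"
    and C2: "(\<lambda>n. (1 / \<alpha> (Suc n)) * \<bar>1 / lam (Suc n) - 1 / lam n\<bar>) \<longlonglongrightarrow> 0"
    and C3: "(\<lambda>n. (1 / lam (Suc n)) * \<bar>1 - \<alpha> n / \<alpha> (Suc n)\<bar>) \<longlonglongrightarrow> 0"
    and C4: "(\<lambda>n. \<alpha> n / lam n) \<longlonglongrightarrow> 0"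
    and C5: "(\<lambda>n. \<theta> n / (\<alpha> (Suc n) * lam (Suc n))) \<longlonglongrightarrow> 0"
    and C6: "\<exists>\<sigma>\<ge>1. \<forall>n\<ge>1. lam n / lam (Suc n) \<le> \<sigma>"
    and C7: "(\<lambda>n. \<beta> n / \<alpha> (Suc n)) \<longlonglongrightarrow> 0"
    (* the algorithm *)
    and d_init: "\<And>i. i \<in> {1..M} \<Longrightarrow> d i 1 = - gh i (z i 0)"
    and w_first: "\<And>n. n \<ge> 1 \<Longrightarrow> w 1 n = x n"
    and z_step: "\<And>i n. i \<in> {1..M} \<Longrightarrow> n \<ge> 1 \<Longrightarrow>
                    z i n = w i n + \<theta> n *\<^sub>R (w i n - w i (n - 1))"
    and d_step: "\<And>i n. i \<in> {1..M} \<Longrightarrow> n \<ge> 1 \<Longrightarrow>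
                    d i (Suc n) = - gh i (z i n) + \<beta> n *\<^sub>R d i n"
    and y_step: "\<And>i n. i \<in> {1..M} \<Longrightarrow> n \<ge> 1 \<Longrightarrow>
                    y i n = prox (lam n) (f i) (z i n + lam n *\<^sub>R d i (Suc n))"
    and w_step: "\<And>i n. i \<in> {1..M} \<Longrightarrow> n \<ge> 1 \<Longrightarrow>
                    w (Suc i) n = \<alpha> n *\<^sub>R u i + (1 - \<alpha> n) *\<^sub>R T i (y i n)"
    and x_step: "\<And>n. n \<ge> 1 \<Longrightarrow> x (Suc n) = w (Suc M) n"
    (* boundedness hypothesis *)
    and y_bdd: "\<And>i. i \<in> {1..M} \<Longrightarrow> bounded (y i ` {1..})"
  shows "(\<lambda>n. norm (x (Suc n) - x n) / lam n) \<longlonglongrightarrow> 0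
       \<and> (\<lambda>n. norm (x (Suc n) - x n)) \<longlonglongrightarrow> 0
       \<and> (\<forall>xb\<in>S. \<forall>i\<in>{1..M}. \<exists>Q1\<ge>0. \<exists>Q2\<ge>0. \<forall>n\<ge>1.
            (norm (w (Suc i) n - xb))\<^sup>2
              \<le> (norm (w i n - xb))\<^sup>2 + \<theta> n * Q1 + \<alpha> n * Q2
                 - (1 - \<alpha> n) * (norm (T i (y i n) - y i n))\<^sup>2
                 - (norm (z i n - y i n))\<^sup>2
                 + 2 * lam n * (f i xb - f i (y i n))
                 + 2 * lam n * inner (d i (Suc n)) (y i n - xb))"
proof -
  define I where "I = {1..M}"
  have finI: "finite I" by (simp add: I_def)
  define \<Lambda> where "\<Lambda> = 2 * Min (L ` I)"
  have lamL: "lam n \<le> 2 * L i" if "i \<in> I" "n \<ge> 1" for i n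
  proof -
    have "Min (L ` I) \<le> L i" using finI that(1) by simp
    then show ?thesis using rng_lam[OF that(2)] by (simp add: I_def)
  qed
  have lampos: "lam n > 0" if "n \<ge> 1" for n using rng_lam[OF that] by simp
  have lamLam: "lam n \<le> \<Lambda>" if "n \<ge> 1" for n using rng_lam[OF that] by (simp add: \<Lambda>_def I_def)
  have Lam0: "\<Lambda> \<ge> 0" using lamLam[of 1] lampos[of 1] by simp
  define A where "A i n = z i n + lam n *\<^sub>R d i (Suc n)" for i n
  have yopt: "\<forall>v. f i (y i n) + (1 / (2 * lam n)) * (norm (A i n - y i n))\<^sup>2
      \<le> f i v + (1 / (2 * lam n)) * (norm (A i n - v))\<^sup>2" if "i \<in> I" "n \<ge> 1" for i n
  proof -
    have ex: "\<exists>y. \<forall>v. f i y + (1 / (2 * lam n)) * (norm (A i n - y))\<^sup>2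
      \<le> f i v + (1 / (2 * lam n)) * (norm (A i n - v))\<^sup>2"
      by (rule prox_exists) (use A1_cont A1_conv lampos that in \<open>auto simp: I_def\<close>)
    have "y i n = prox (lam n) (f i) (A i n)" using y_step that by (simp add: A_def I_def)
    then show ?thesis using someI_ex[OF ex] unfolding prox_def by simp
  qed
  have yvi: "inner (A i n - y i n) (v - y i n) \<le> lam n * (f i v - f i (y i n))"
    if "i \<in> I" "n \<ge> 1" for i n v
    by (rule prox_vi[OF _ lampos[OF that(2)] yopt[OF that]]) (use A1_conv that in \<open>simp add: I_def\<close>)
  have "\<exists>Ky. \<forall>i\<in>I. \<forall>n\<ge>1. norm (y i n) \<le> Ky"
  proof -
    have "bounded (\<Union>i\<in>I. y i ` {1..})" using y_bdd finI by (auto simp: I_def)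
    then obtain B where "\<forall>p\<in>(\<Union>i\<in>I. y i ` {1..}). norm p \<le> B" unfolding bounded_iff by blast
    then show ?thesis by auto
  qed
  then obtain Ky where Ky: "\<And>i n. i \<in> I \<Longrightarrow> n \<ge> 1 \<Longrightarrow> norm (y i n) \<le> Ky" by blast
  define KT where "KT = (\<Sum>i\<in>I. norm (T i 0))"
  define Ku where "Ku = (\<Sum>i\<in>I. norm (u i))"
  have Tne: "norm (T i p - T i q) \<le> norm (p - q)" if "i \<in> I" for i p q
    using fne_nonexp A3 that by (auto simp: I_def)
  have KTi: "norm (T i 0) \<le> KT" if "i \<in> I" for i
    unfolding KT_def using finI that by (intro member_le_sum) auto
  have Kui: "norm (u i) \<le> Ku" if "i \<in> I" for i
    unfolding Ku_def using finI that by (intro member_le_sum) auto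
  have KTy: "norm (T i (y i n)) \<le> KT + Ky" if "i \<in> I" "n \<ge> 1" for i n
  proof -
    have "norm (T i (y i n)) \<le> norm (T i 0) + norm (T i (y i n) - T i 0)" by (rule norm_triangle_sub)
    also have "\<dots> \<le> KT + Ky" using KTi[OF that(1)] Tne[OF that(1), of "y i n" 0] Ky[OF that] by simp
    finally show ?thesis .
  qed
  have wS: "norm (w (Suc i) n) \<le> Ku + KT + Ky" if "i \<in> I" "n \<ge> 1" for i n
  proof -
    have a: "0 < \<alpha> n" "\<alpha> n \<le> 1" using rng_\<alpha>[OF that(2)] by auto
    have eq: "w (Suc i) n = \<alpha> n *\<^sub>R u i + (1 - \<alpha> n) *\<^sub>R T i (y i n)"
      using w_step that by (simp add: I_def)
    have "norm (w (Suc i) n) \<le> norm (\<alpha> n *\<^sub>R u i) + norm ((1 - \<alpha> n) *\<^sub>R T i (y i n))"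
      unfolding eq by (rule norm_triangle_ineq)
    also have "\<dots> = \<alpha> n * norm (u i) + (1 - \<alpha> n) * norm (T i (y i n))" using a by simp
    also have "\<dots> \<le> 1 * Ku + 1 * (KT + Ky)"
      using a Kui[OF that(1)] KTy[OF that] by (intro add_mono mult_mono) auto
    finally show ?thesis by simp
  qed
  define KW where "KW = norm (x 1) + Ku + KT + Ky + (\<Sum>i\<in>{1..Suc M}. norm (w i 0))"
  have KTKy: "0 \<le> KT + Ky" using KTy[of 1 1] M by (simp add: I_def) (meson norm_ge_zero order_trans)
  have Ku0: "Ku \<ge> 0" unfolding Ku_def by (simp add: sum_nonneg)
  have sw0: "(\<Sum>i\<in>{1..Suc M}. norm (w i 0)) \<ge> 0" by (simp add: sum_nonneg)
  have KW: "norm (w i n) \<le> KW" if iM: "i \<in> {1..Suc M}" for i n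
  proof (cases "n = 0")
    case True
    have "norm (w i 0) \<le> (\<Sum>i\<in>{1..Suc M}. norm (w i 0))" using iM by (intro member_le_sum) auto
    then have "norm (w i n) \<le> (\<Sum>i\<in>{1..Suc M}. norm (w i 0))" using True by simp
    then show ?thesis using Ku0 KTKy norm_ge_zero[of "x 1"] unfolding KW_def by linarith
  next
    case False
    show ?thesis
    proof (cases "i = 1")
      case True
      show ?thesis
      proof (cases "n = 1")
        case True
        then have "norm (w i n) = norm (x 1)" using \<open>i = 1\<close> w_first[of 1] by simp
        then show ?thesis using Ku0 KTKy sw0 unfolding KW_def by linarith
      next
        case False
        then have n2: "n \<ge> 2" using \<open>n \<noteq> 0\<close> by simp
        have "w i n = w (Suc M) (n - 1)" using \<open>i = 1\<close> w_first[of n] x_step[of "n - 1"] n2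
          by (simp add: Suc_diff_1)
        also have "norm \<dots> \<le> Ku + KT + Ky" using wS[of M "n - 1"] M n2 by (simp add: I_def)
        finally show ?thesis using sw0 norm_ge_zero[of "x 1"] unfolding KW_def by linarith
      qed
    next
      case False
      then obtain j where j: "i = Suc j" "j \<in> I" using iM \<open>i \<noteq> 1\<close> by (cases i) (auto simp: I_def)
      have "norm (w i n) \<le> Ku + KT + Ky" using wS[OF j(2), of n] \<open>n \<noteq> 0\<close> j(1) by simp
      then show ?thesis using sw0 norm_ge_zero[of "x 1"] unfolding KW_def by linarith
    qed
  qed
  have KW0: "KW \<ge> 0"
  proof -
    have "norm (w 1 0) \<le> KW" by (rule KW) simp
    then show ?thesis using norm_ge_zero[of "w 1 0"] by linarith
  qed
  have wI: "i \<in> {1..Suc M}" "Suc i \<in> {1..Suc M}" if "i \<in> I" for i using that by (auto simp: I_def)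
  have thn: "0 \<le> \<theta> n" "\<theta> n < 1" if "n \<ge> 1" for n using rng_\<theta>[OF that] by auto
  have zdiff: "z i n - w i n = \<theta> n *\<^sub>R (w i n - w i (n - 1))" if "i \<in> I" "n \<ge> 1" for i n
    using z_step that by (simp add: I_def)
  have wdiff: "norm (w i n - w i m) \<le> 2 * KW" if "i \<in> I" for i n m
    using norm_triangle_ineq4[of "w i n" "w i m"] KW[OF wI(1)[OF that], of n] KW[OF wI(1)[OF that], of m] by simp
  have Kz: "norm (z i n) \<le> 3 * KW" if "i \<in> I" "n \<ge> 1" for i n
  proof -
    have "norm (z i n) \<le> norm (w i n) + norm (\<theta> n *\<^sub>R (w i n - w i (n - 1)))"
      using zdiff[OF that] norm_triangle_ineq[of "w i n" "\<theta> n *\<^sub>R (w i n - w i (n - 1))"]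
      by (metis add_diff_cancel_left' diff_add_cancel)
    also have "\<dots> \<le> KW + 1 * (2 * KW)"
    proof -
      have "\<theta> n * norm (w i n - w i (n - 1)) \<le> 1 * (2 * KW)"
        by (rule mult_mono) (use thn[OF that(2)] wdiff[OF that(1), of n "n - 1"] KW0 in auto)
      then show ?thesis using KW[OF wI(1)[OF that(1)], of n] thn[OF that(2)] by simp
    qed
    finally show ?thesis by simp
  qed
  define KG where "KG = (\<Sum>i\<in>I. norm (gh i 0) + (1 / L i) * (3 * KW))"
  have KG: "norm (gh i (z i n)) \<le> KG" if "i \<in> I" "n \<ge> 1" for i n
  proof -
    have Li: "L i > 0" using A2_L that by (simp add: I_def)
    have "norm (gh i (z i n)) \<le> norm (gh i 0) + norm (gh i (z i n) - gh i 0)" by (rule norm_triangle_sub)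
    also have "\<dots> \<le> norm (gh i 0) + (1 / L i) * (3 * KW)"
    proof -
      have "norm (gh i (z i n) - gh i 0) \<le> (1 / L i) * norm (z i n - 0)"
        using A2_lip[of i "z i n" 0] that by (simp add: I_def)
      also have "\<dots> \<le> (1 / L i) * (3 * KW)" using Kz[OF that] Li by (intro mult_left_mono) auto
      finally show ?thesis by simp
    qed
    also have "\<dots> \<le> KG" unfolding KG_def using finI that(1) Li KW0
      by (intro member_le_sum[where f = "\<lambda>i. norm (gh i 0) + (1 / L i) * (3 * KW)"]) (auto simp: I_def intro!: add_nonneg_nonneg divide_nonneg_pos A2_L)
    finally show ?thesis .
  qed
  have I1: "1 \<in> I" using M by (simp add: I_def)
  have KG0: "KG \<ge> 0" using KG[OF I1, of 1] norm_ge_zero[of "gh 1 (z 1 1)"] by linarith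
  obtain Nb where Nb: "Nb \<ge> 1" "\<And>n. n \<ge> Nb \<Longrightarrow> \<beta> n \<le> 1 / 2"
  proof -
    obtain N0 where "\<And>n. n \<ge> N0 \<Longrightarrow> norm (\<beta> n - 0) < 1 / 2"
      using LIMSEQ_D[OF lim_\<beta>, of "1/2"] by auto
    then show ?thesis using that[of "max 1 N0"] by fastforce
  qed
  define KD where "KD = 2 * KG + (\<Sum>i\<in>I. \<Sum>k\<le>Nb. norm (d i k))"
  have KD: "norm (d i n) \<le> KD" if iI: "i \<in> I" for i n
  proof -
    have le1: "norm (d i k) \<le> (\<Sum>i\<in>I. \<Sum>k\<le>Nb. norm (d i k))" if "k \<le> Nb" for k
    proof -
      have "norm (d i k) \<le> (\<Sum>k\<le>Nb. norm (d i k))" using that by (intro member_le_sum) auto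
      also have "\<dots> \<le> (\<Sum>i\<in>I. \<Sum>k\<le>Nb. norm (d i k))"
        using iI finI by (intro member_le_sum[where f = "\<lambda>i. \<Sum>k\<le>Nb. norm (d i k)"]) (auto intro: sum_nonneg)
      finally show ?thesis .
    qed
    show ?thesis
    proof (cases "n \<le> Nb")
      case True then show ?thesis using le1[of n] KG0 by (simp add: KD_def)
    next
      case False
      have "norm (d i n) \<le> KD" if "Nb \<le> n" for n
        using that
      proof (induction n rule: dec_induct)
        case base then show ?case using le1[of Nb] KG0 by (simp add: KD_def)
      next
        case (step m)
        have m1: "m \<ge> 1" using step.hyps Nb by simp
        have "d i (Suc m) = - gh i (z i m) + \<beta> m *\<^sub>R d i m" using d_step iI m1 by (simp add: I_def)
        then have "norm (d i (Suc m)) \<le> norm (gh i (z i m)) + \<bar>\<beta> m\<bar> * norm (d i m)"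
          by (metis norm_minus_cancel norm_scaleR norm_triangle_ineq)
        also have "\<dots> \<le> KG + (1/2) * KD"
          using KG[OF iI m1] Nb(2)[OF step.hyps(1)] rng_\<beta>[OF m1] step.IH
          by (intro add_mono mult_mono) auto
        also have "\<dots> \<le> KD"
        proof -
          have "0 \<le> (\<Sum>i\<in>I. \<Sum>k\<le>Nb. norm (d i k))" by (intro sum_nonneg) auto
          then show ?thesis by (simp add: KD_def)
        qed
        finally show ?case .
      qed
      then show ?thesis using False by simp
    qed
  qed
  have KD0: "KD \<ge> 0" using KD[OF I1, of 0] norm_ge_zero[of "d 1 0"] by linarith
  have partb: "\<forall>xb\<in>S. \<forall>i\<in>{1..M}. \<exists>Q1\<ge>0. \<exists>Q2\<ge>0. \<forall>n\<ge>1.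
            (norm (w (Suc i) n - xb))\<^sup>2
              \<le> (norm (w i n - xb))\<^sup>2 + \<theta> n * Q1 + \<alpha> n * Q2
                 - (1 - \<alpha> n) * (norm (T i (y i n) - y i n))\<^sup>2
                 - (norm (z i n - y i n))\<^sup>2
                 + 2 * lam n * (f i xb - f i (y i n))
                 + 2 * lam n * inner (d i (Suc n)) (y i n - xb)"
  proof (intro ballI)
    fix xb i assume xb: "xb \<in> S" and iM: "i \<in> {1..M}"
    have iI: "i \<in> I" using iM by (simp add: I_def)
    have Txb: "T i xb = xb" using xb iM S_def by (auto simp: Fix_def)
    define Q1 where "Q1 = 2 * (KW + norm xb) * (2 * KW) + (2 * KW)\<^sup>2"
    define Q2 where "Q2 = (norm (u i - xb))\<^sup>2"
    show "\<exists>Q1\<ge>0. \<exists>Q2\<ge>0. \<forall>n\<ge>1.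
            (norm (w (Suc i) n - xb))\<^sup>2
              \<le> (norm (w i n - xb))\<^sup>2 + \<theta> n * Q1 + \<alpha> n * Q2
                 - (1 - \<alpha> n) * (norm (T i (y i n) - y i n))\<^sup>2
                 - (norm (z i n - y i n))\<^sup>2
                 + 2 * lam n * (f i xb - f i (y i n))
                 + 2 * lam n * inner (d i (Suc n)) (y i n - xb)"
    proof -
    have Q10: "Q1 \<ge> 0" using KW0 by (simp add: Q1_def)
    have Q20: "Q2 \<ge> 0" by (simp add: Q2_def)
    have main: "(norm (w (Suc i) n - xb))\<^sup>2
              \<le> (norm (w i n - xb))\<^sup>2 + \<theta> n * Q1 + \<alpha> n * Q2
                 - (1 - \<alpha> n) * (norm (T i (y i n) - y i n))\<^sup>2
                 - (norm (z i n - y i n))\<^sup>2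
                 + 2 * lam n * (f i xb - f i (y i n))
                 + 2 * lam n * inner (d i (Suc n)) (y i n - xb)" if n: "n \<ge> 1" for n
    proof -
      have a: "0 < \<alpha> n" "\<alpha> n \<le> 1" using rng_\<alpha>[OF n] by auto
      have e1: "w (Suc i) n - xb = \<alpha> n *\<^sub>R (u i - xb) + (1 - \<alpha> n) *\<^sub>R (T i (y i n) - xb)"
        using w_step[OF iM n] by (simp add: algebra_simps)
      have s1: "(norm (w (Suc i) n - xb))\<^sup>2 \<le> \<alpha> n * Q2 + (1 - \<alpha> n) * (norm (T i (y i n) - xb))\<^sup>2"
        unfolding e1 Q2_def by (rule norm_sq_convex) (use a in auto)
      have s2: "(norm (T i (y i n) - xb))\<^sup>2 \<le> (norm (y i n - xb))\<^sup>2 - (norm (T i (y i n) - y i n))\<^sup>2"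
        using fne_fix[OF A3[OF iM] Txb] .
      have s12: "(norm (w (Suc i) n - xb))\<^sup>2 \<le> \<alpha> n * Q2 + (norm (y i n - xb))\<^sup>2 - (1 - \<alpha> n) * (norm (T i (y i n) - y i n))\<^sup>2"
      proof -
        have "(1 - \<alpha> n) * (norm (T i (y i n) - xb))\<^sup>2 \<le> (1 - \<alpha> n) * ((norm (y i n - xb))\<^sup>2 - (norm (T i (y i n) - y i n))\<^sup>2)"
          using s2 a by (intro mult_left_mono) auto
        moreover have "\<alpha> n * (norm (y i n - xb))\<^sup>2 \<ge> 0" using a by simp
        ultimately show ?thesis using s1 by (simp add: algebra_simps)
      qed
      have vi: "inner (A i n - y i n) (xb - y i n) \<le> lam n * (f i xb - f i (y i n))" by (rule yvi[OF iI n])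
      have eqA: "A i n - y i n = (z i n - y i n) + lam n *\<^sub>R d i (Suc n)" by (simp add: A_def)
      have "inner (A i n - y i n) (xb - y i n) = inner (z i n - y i n) (xb - y i n) + lam n * inner (d i (Suc n)) (xb - y i n)"
        unfolding eqA by (simp add: inner_add_left)
      then have vi2: "inner (z i n - y i n) (xb - y i n) + lam n * inner (d i (Suc n)) (xb - y i n) \<le> lam n * (f i xb - f i (y i n))"
        using vi by linarith
      have pz: "2 * inner (z i n - y i n) (xb - y i n) = (norm (z i n - y i n))\<^sup>2 + (norm (y i n - xb))\<^sup>2 - (norm (z i n - xb))\<^sup>2"
        using polar2[of "z i n - y i n" "xb - y i n"] by (simp add: norm_minus_commute)
      have dd: "inner (d i (Suc n)) (xb - y i n) = - inner (d i (Suc n)) (y i n - xb)"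
        by (simp add: inner_diff_right)
      have s3: "(norm (y i n - xb))\<^sup>2 \<le> (norm (z i n - xb))\<^sup>2 - (norm (z i n - y i n))\<^sup>2 + 2 * lam n * (f i xb - f i (y i n)) + 2 * lam n * inner (d i (Suc n)) (y i n - xb)"
        using vi2 pz dd by (simp add: algebra_simps)
      have s4: "(norm (z i n - xb))\<^sup>2 \<le> (norm (w i n - xb))\<^sup>2 + \<theta> n * Q1"
      proof -
        define X where "X = w i n - xb"
        define Y where "Y = w i n - w i (n - 1)"
        have zx: "z i n - xb = X + \<theta> n *\<^sub>R Y" using zdiff[OF iI n] by (simp add: X_def Y_def algebra_simps)
        have th: "0 \<le> \<theta> n" "\<theta> n \<le> 1" using thn[OF n] by auto
        have nX: "norm X \<le> KW + norm xb" unfolding X_def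
          using norm_triangle_ineq4[of "w i n" xb] KW[OF wI(1)[OF iI], of n] by simp
        have nY: "norm Y \<le> 2 * KW" unfolding Y_def by (rule wdiff[OF iI])
        have "2 * \<theta> n * inner X Y \<le> 2 * \<theta> n * (norm X * norm Y)"
          using th by (intro mult_left_mono norm_cauchy_schwarz) auto
        also have "\<dots> \<le> 2 * \<theta> n * ((KW + norm xb) * (2 * KW))"
          using th nX nY KW0 by (intro mult_left_mono mult_mono) auto
        finally have t1: "2 * \<theta> n * inner X Y \<le> \<theta> n * (2 * (KW + norm xb) * (2 * KW))" by (simp add: algebra_simps)
        have "(\<theta> n)\<^sup>2 * (norm Y)\<^sup>2 \<le> \<theta> n * (norm Y)\<^sup>2"
          using th by (intro mult_right_mono) (auto simp: power2_eq_square mult_left_le_one_le)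
        also have "\<dots> \<le> \<theta> n * (2 * KW)\<^sup>2"
          using th nY by (intro mult_left_mono power_mono) auto
        finally have t2: "(\<theta> n)\<^sup>2 * (norm Y)\<^sup>2 \<le> \<theta> n * (2 * KW)\<^sup>2" .
        have "(norm (z i n - xb))\<^sup>2 = (norm X)\<^sup>2 + 2 * \<theta> n * inner X Y + (\<theta> n)\<^sup>2 * (norm Y)\<^sup>2"
          unfolding zx by (rule norm_sq_add_scale)
        also have "\<dots> \<le> (norm X)\<^sup>2 + \<theta> n * Q1" using t1 t2 by (simp add: Q1_def algebra_simps)
        finally show ?thesis by (simp add: X_def)
      qed
      show "(norm (w (Suc i) n - xb))\<^sup>2
              \<le> (norm (w i n - xb))\<^sup>2 + \<theta> n * Q1 + \<alpha> n * Q2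
                 - (1 - \<alpha> n) * (norm (T i (y i n) - y i n))\<^sup>2
                 - (norm (z i n - y i n))\<^sup>2
                 + 2 * lam n * (f i xb - f i (y i n))
                 + 2 * lam n * inner (d i (Suc n)) (y i n - xb)"
        using s12 s3 s4 by linarith
    qed
    show ?thesis using Q10 Q20 main by blast
    qed
  qed
  define K5 where "K5 = Ku + KT + Ky"
  define KA where "KA = 3 * KW + \<Lambda> * KD + Ky"
  define KK where "KK = K5 + KA + 2 * KW + KG + 2 * KD"
  define \<Phi> where "\<Phi> n = \<bar>\<alpha> n - \<alpha> (n - 1)\<bar> + \<bar>lam (n - 1) / lam n - 1\<bar> + \<theta> n + \<theta> (n - 1)
      + \<bar>lam n - lam (n - 1)\<bar> + lam (n - 1) * \<beta> (n - 1)" for n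
  have Ky0: "Ky \<ge> 0" using Ky[OF I1, of 1] norm_ge_zero[of "y 1 1"] by linarith
  have KT0: "KT \<ge> 0" unfolding KT_def by (simp add: sum_nonneg)
  have K50: "K5 \<ge> 0" using Ku0 KT0 Ky0 by (simp add: K5_def)
  have KA0: "KA \<ge> 0" using KW0 Lam0 KD0 Ky0 by (simp add: KA_def)
  have KKge: "K5 \<le> KK" "KA \<le> KK" "2 * KW \<le> KK" "KG \<le> KK" "2 * KD \<le> KK" "KK \<ge> 0"
    using K50 KA0 KW0 KG0 KD0 by (auto simp: KK_def)
  have Phi0: "\<Phi> n \<ge> 0" if "n \<ge> 2" for n
  proof -
    have n1': "n - 1 \<ge> 1" "n \<ge> 1" using that by auto
    have "\<theta> n \<ge> 0" "\<theta> (n - 1) \<ge> 0" using thn n1' by auto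
    moreover have "lam (n - 1) * \<beta> (n - 1) \<ge> 0" using rng_lam[OF n1'(1)] rng_\<beta>[OF n1'(1)] by simp
    ultimately show ?thesis by (simp add: \<Phi>_def)
  qed
  have erec: "norm (w (Suc i) n - w (Suc i) (n - 1)) \<le> (1 - \<alpha> n) * norm (w i n - w i (n - 1)) + KK * \<Phi> n"
    if iI: "i \<in> I" and n2: "n \<ge> 2" for i n
  proof -
    have n1: "n \<ge> 1" and n1': "n - 1 \<ge> 1" using n2 by auto
    have iM: "i \<in> {1..M}" using iI by (simp add: I_def)
    have a: "0 < \<alpha> n" "\<alpha> n \<le> 1" using rng_\<alpha>[OF n1] by auto
    have wn: "w (Suc i) n = \<alpha> n *\<^sub>R u i + (1 - \<alpha> n) *\<^sub>R T i (y i n)" using w_step[OF iM n1] .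
    have wn1: "w (Suc i) (n - 1) = \<alpha> (n - 1) *\<^sub>R u i + (1 - \<alpha> (n - 1)) *\<^sub>R T i (y i (n - 1))" using w_step[OF iM n1'] .
    have "w (Suc i) n - w (Suc i) (n - 1) = (\<alpha> n - \<alpha> (n - 1)) *\<^sub>R (u i - T i (y i (n - 1)))
        + (1 - \<alpha> n) *\<^sub>R (T i (y i n) - T i (y i (n - 1)))"
      unfolding wn wn1 by (simp add: algebra_simps)
    then have "norm (w (Suc i) n - w (Suc i) (n - 1)) \<le> norm ((\<alpha> n - \<alpha> (n - 1)) *\<^sub>R (u i - T i (y i (n - 1))))
        + norm ((1 - \<alpha> n) *\<^sub>R (T i (y i n) - T i (y i (n - 1))))"
      by (simp only: norm_triangle_ineq)
    also have "\<dots> = \<bar>\<alpha> n - \<alpha> (n - 1)\<bar> * norm (u i - T i (y i (n - 1))) + (1 - \<alpha> n) * norm (T i (y i n) - T i (y i (n - 1)))"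
      using a by simp
    also have "\<dots> \<le> \<bar>\<alpha> n - \<alpha> (n - 1)\<bar> * K5 + (1 - \<alpha> n) * norm (y i n - y i (n - 1))"
    proof (intro add_mono mult_left_mono)
      show "norm (u i - T i (y i (n - 1))) \<le> K5"
        using norm_triangle_ineq4[of "u i" "T i (y i (n - 1))"] Kui[OF iI] KTy[OF iI n1'] by (simp add: K5_def)
      show "norm (T i (y i n) - T i (y i (n - 1))) \<le> norm (y i n - y i (n - 1))" by (rule Tne[OF iI])
    qed (use a in auto)
    finally have ew: "norm (w (Suc i) n - w (Suc i) (n - 1)) \<le> \<bar>\<alpha> n - \<alpha> (n - 1)\<bar> * K5 + (1 - \<alpha> n) * norm (y i n - y i (n - 1))" .
    have ey: "norm (y i n - y i (n - 1)) \<le> norm (A i n - A i (n - 1)) + \<bar>lam (n - 1) / lam n - 1\<bar> * norm (A i n - y i n)"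
      by (rule prox_pair[OF lampos[OF n1] lampos[OF n1'] yvi[OF iI n1] yvi[OF iI n1']])
    have eAy: "norm (A i n - y i n) \<le> KA"
    proof -
      have "norm (A i n - y i n) \<le> norm (z i n) + norm (lam n *\<^sub>R d i (Suc n)) + norm (y i n)"
        unfolding A_def by (rule tri2')
      also have "\<dots> \<le> 3 * KW + \<Lambda> * KD + Ky"
        using Kz[OF iI n1] lamLam[OF n1] lampos[OF n1] KD[OF iI, of "Suc n"] Ky[OF iI n1] Lam0
        by (intro add_mono) (auto intro!: mult_mono)
      finally show ?thesis by (simp add: KA_def)
    qed
    have An: "A i n = (z i n - lam n *\<^sub>R gh i (z i n)) + (lam n * \<beta> n) *\<^sub>R d i n"
      unfolding A_def d_step[OF iM n1] by (simp add: algebra_simps scaleR_add_right)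
    have An1: "A i (n - 1) = (z i (n - 1) - lam (n - 1) *\<^sub>R gh i (z i (n - 1))) + (lam (n - 1) * \<beta> (n - 1)) *\<^sub>R d i (n - 1)"
    proof -
      have dn: "d i (Suc (n - 1)) = - gh i (z i (n - 1)) + \<beta> (n - 1) *\<^sub>R d i (n - 1)" by (rule d_step[OF iM n1'])
      show ?thesis unfolding A_def dn by (simp add: algebra_simps scaleR_add_right)
    qed
    have "A i n - A i (n - 1) = ((z i n - lam n *\<^sub>R gh i (z i n)) - (z i (n - 1) - lam n *\<^sub>R gh i (z i (n - 1))))
        + ((lam (n - 1) - lam n) *\<^sub>R gh i (z i (n - 1)) + ((lam n * \<beta> n) *\<^sub>R d i n - (lam (n - 1) * \<beta> (n - 1)) *\<^sub>R d i (n - 1)))"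
      unfolding An An1 by (simp add: algebra_simps)
    then have "norm (A i n - A i (n - 1)) \<le> norm ((z i n - lam n *\<^sub>R gh i (z i n)) - (z i (n - 1) - lam n *\<^sub>R gh i (z i (n - 1))))
        + (norm ((lam (n - 1) - lam n) *\<^sub>R gh i (z i (n - 1))) + (norm ((lam n * \<beta> n) *\<^sub>R d i n) + norm ((lam (n - 1) * \<beta> (n - 1)) *\<^sub>R d i (n - 1))))"
      by (simp only: tri3)
    also have "\<dots> \<le> norm (z i n - z i (n - 1)) + (\<bar>lam n - lam (n - 1)\<bar> * KG + (lam (n - 1) * \<beta> (n - 1) * KD + lam (n - 1) * \<beta> (n - 1) * KD))"
    proof (intro add_mono)
      show "norm ((z i n - lam n *\<^sub>R gh i (z i n)) - (z i (n - 1) - lam n *\<^sub>R gh i (z i (n - 1)))) \<le> norm (z i n - z i (n - 1))"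
        by (rule grad_step_nonexp[OF A2_conv[OF iM] A2_grad[OF iM] A2_L[OF iM] A2_lip[OF iM] lampos[OF n1] lamL[OF iI n1]])
      show "norm ((lam (n - 1) - lam n) *\<^sub>R gh i (z i (n - 1))) \<le> \<bar>lam n - lam (n - 1)\<bar> * KG"
        using KG[OF iI n1'] by (simp add: abs_minus_commute mult_left_mono)
      have lb: "0 \<le> lam n * \<beta> n" "lam n * \<beta> n \<le> lam (n - 1) * \<beta> (n - 1)"
        using dec_lam[OF n1'] dec_\<beta>[OF n1'] rng_lam[OF n1] rng_\<beta>[OF n1] rng_\<beta>[OF n1'] n1
        by (auto intro!: mult_mono)
      show "norm ((lam n * \<beta> n) *\<^sub>R d i n) \<le> lam (n - 1) * \<beta> (n - 1) * KD"
        using lb KD[OF iI, of n] KD0 by (simp add: mult_mono)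
      show "norm ((lam (n - 1) * \<beta> (n - 1)) *\<^sub>R d i (n - 1)) \<le> lam (n - 1) * \<beta> (n - 1) * KD"
        using lb KD[OF iI, of "n - 1"] by (simp add: mult_left_mono)
    qed
    finally have eA: "norm (A i n - A i (n - 1)) \<le> norm (z i n - z i (n - 1)) + \<bar>lam n - lam (n - 1)\<bar> * KG + 2 * KD * (lam (n - 1) * \<beta> (n - 1))"
      by (simp add: algebra_simps)
    have ez: "norm (z i n - z i (n - 1)) \<le> norm (w i n - w i (n - 1)) + 2 * KW * \<theta> n + 2 * KW * \<theta> (n - 1)"
    proof -
      have "z i n - z i (n - 1) = (w i n - w i (n - 1)) + (\<theta> n *\<^sub>R (w i n - w i (n - 1)) - \<theta> (n - 1) *\<^sub>R (w i (n - 1) - w i (n - 1 - 1)))"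
        using zdiff[OF iI n1] zdiff[OF iI n1'] by (simp add: algebra_simps)
      then have "norm (z i n - z i (n - 1)) \<le> norm (w i n - w i (n - 1)) + (norm (\<theta> n *\<^sub>R (w i n - w i (n - 1))) + norm (\<theta> (n - 1) *\<^sub>R (w i (n - 1) - w i (n - 1 - 1))))"
        by (simp only: tri2)
      also have "\<dots> \<le> norm (w i n - w i (n - 1)) + (\<theta> n * (2 * KW) + \<theta> (n - 1) * (2 * KW))"
        using thn[OF n1] thn[OF n1'] wdiff[OF iI] by (intro add_mono order.refl) (auto intro!: mult_left_mono)
      finally show ?thesis by (simp add: algebra_simps)
    qed
    define R where "R = \<bar>\<alpha> n - \<alpha> (n - 1)\<bar> * K5 + (2 * KW * \<theta> n + 2 * KW * \<theta> (n - 1) + \<bar>lam n - lam (n - 1)\<bar> * KG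
        + 2 * KD * (lam (n - 1) * \<beta> (n - 1)) + \<bar>lam (n - 1) / lam n - 1\<bar> * KA)"
    have S0: "0 \<le> 2 * KW * \<theta> n + 2 * KW * \<theta> (n - 1) + \<bar>lam n - lam (n - 1)\<bar> * KG
        + 2 * KD * (lam (n - 1) * \<beta> (n - 1)) + \<bar>lam (n - 1) / lam n - 1\<bar> * KA"
      using KW0 thn[OF n1] thn[OF n1'] KG0 KD0 KA0 rng_lam[OF n1'] rng_\<beta>[OF n1'] by simp
    have "norm (y i n - y i (n - 1)) \<le> norm (w i n - w i (n - 1)) + (2 * KW * \<theta> n + 2 * KW * \<theta> (n - 1) + \<bar>lam n - lam (n - 1)\<bar> * KG
        + 2 * KD * (lam (n - 1) * \<beta> (n - 1)) + \<bar>lam (n - 1) / lam n - 1\<bar> * KA)"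
    proof -
      have "\<bar>lam (n - 1) / lam n - 1\<bar> * norm (A i n - y i n) \<le> \<bar>lam (n - 1) / lam n - 1\<bar> * KA"
        using eAy by (intro mult_left_mono) auto
      then show ?thesis using ey eA ez by linarith
    qed
    then have "(1 - \<alpha> n) * norm (y i n - y i (n - 1)) \<le> (1 - \<alpha> n) * norm (w i n - w i (n - 1)) + (1 - \<alpha> n) * (2 * KW * \<theta> n + 2 * KW * \<theta> (n - 1) + \<bar>lam n - lam (n - 1)\<bar> * KG
        + 2 * KD * (lam (n - 1) * \<beta> (n - 1)) + \<bar>lam (n - 1) / lam n - 1\<bar> * KA)"
      using a by (simp add: mult_left_mono flip: distrib_left)
    also have "\<dots> \<le> (1 - \<alpha> n) * norm (w i n - w i (n - 1)) + (2 * KW * \<theta> n + 2 * KW * \<theta> (n - 1) + \<bar>lam n - lam (n - 1)\<bar> * KG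
        + 2 * KD * (lam (n - 1) * \<beta> (n - 1)) + \<bar>lam (n - 1) / lam n - 1\<bar> * KA)"
      using a S0 by (intro add_left_mono mult_left_le_one_le) auto
    finally have e2: "norm (w (Suc i) n - w (Suc i) (n - 1)) \<le> (1 - \<alpha> n) * norm (w i n - w i (n - 1)) + R"
      using ew by (simp add: R_def)
    have "R \<le> KK * \<bar>\<alpha> n - \<alpha> (n - 1)\<bar> + (KK * \<theta> n + KK * \<theta> (n - 1) + KK * \<bar>lam n - lam (n - 1)\<bar>
        + KK * (lam (n - 1) * \<beta> (n - 1)) + KK * \<bar>lam (n - 1) / lam n - 1\<bar>)"
    proof -
      have lb0: "0 \<le> lam (n - 1) * \<beta> (n - 1)" using rng_lam[OF n1'] rng_\<beta>[OF n1'] by simp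
      have t1: "\<bar>\<alpha> n - \<alpha> (n - 1)\<bar> * K5 \<le> KK * \<bar>\<alpha> n - \<alpha> (n - 1)\<bar>"
        using mult_right_mono[OF KKge(1), of "\<bar>\<alpha> n - \<alpha> (n - 1)\<bar>"] by (simp add: mult.commute)
      have t2: "2 * KW * \<theta> n \<le> KK * \<theta> n"
        using mult_right_mono[OF KKge(3), of "\<theta> n"] thn[OF n1] by simp
      have t3: "2 * KW * \<theta> (n - 1) \<le> KK * \<theta> (n - 1)"
        using mult_right_mono[OF KKge(3), of "\<theta> (n - 1)"] thn[OF n1'] by simp
      have t4: "\<bar>lam n - lam (n - 1)\<bar> * KG \<le> KK * \<bar>lam n - lam (n - 1)\<bar>"
        using mult_right_mono[OF KKge(4), of "\<bar>lam n - lam (n - 1)\<bar>"] by (simp add: mult.commute)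
      have t5: "2 * KD * (lam (n - 1) * \<beta> (n - 1)) \<le> KK * (lam (n - 1) * \<beta> (n - 1))"
        using mult_right_mono[OF KKge(5) lb0] by simp
      have t6: "\<bar>lam (n - 1) / lam n - 1\<bar> * KA \<le> KK * \<bar>lam (n - 1) / lam n - 1\<bar>"
        using mult_right_mono[OF KKge(2), of "\<bar>lam (n - 1) / lam n - 1\<bar>"] by (simp add: mult.commute)
      show ?thesis unfolding R_def using t1 t2 t3 t4 t5 t6 by linarith
    qed
    also have "\<dots> = KK * \<Phi> n" by (simp add: \<Phi>_def algebra_simps)
    finally show ?thesis using e2 by linarith
  qed
  have eiter: "norm (w (Suc (Suc j)) n - w (Suc (Suc j)) (n - 1))
      \<le> (1 - \<alpha> n) * norm (w 1 n - w 1 (n - 1)) + real (Suc j) * (KK * \<Phi> n)"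
    if jM: "j < M" and n2: "n \<ge> 2" for j n
    using jM
  proof (induction j)
    case 0
    show ?case using erec[OF I1 n2] by simp
  next
    case (Suc j)
    have a: "0 < \<alpha> n" "\<alpha> n \<le> 1" using rng_\<alpha>[of n] n2 by auto
    have F0: "KK * \<Phi> n \<ge> 0" using KKge(6) Phi0[OF n2] by simp
    have jI: "Suc (Suc j) \<in> I" using Suc.prems by (simp add: I_def)
    have IH: "norm (w (Suc (Suc j)) n - w (Suc (Suc j)) (n - 1))
      \<le> (1 - \<alpha> n) * norm (w 1 n - w 1 (n - 1)) + real (Suc j) * (KK * \<Phi> n)" using Suc by simp
    have "norm (w (Suc (Suc (Suc j))) n - w (Suc (Suc (Suc j))) (n - 1))
        \<le> (1 - \<alpha> n) * norm (w (Suc (Suc j)) n - w (Suc (Suc j)) (n - 1)) + KK * \<Phi> n"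
      by (rule erec[OF jI n2])
    also have "\<dots> \<le> (1 - \<alpha> n) * ((1 - \<alpha> n) * norm (w 1 n - w 1 (n - 1)) + real (Suc j) * (KK * \<Phi> n)) + KK * \<Phi> n"
      using IH a by (intro add_right_mono mult_left_mono) auto
    also have "\<dots> \<le> (1 - \<alpha> n) * norm (w 1 n - w 1 (n - 1)) + real (Suc (Suc j)) * (KK * \<Phi> n)"
    proof -
      have "(1 - \<alpha> n) * ((1 - \<alpha> n) * norm (w 1 n - w 1 (n - 1))) \<le> (1 - \<alpha> n) * norm (w 1 n - w 1 (n - 1))"
        using a by (intro mult_left_le_one_le) auto
      moreover have "(1 - \<alpha> n) * (real (Suc j) * (KK * \<Phi> n)) \<le> real (Suc j) * (KK * \<Phi> n)"
        using a F0 by (intro mult_left_le_one_le) auto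
      ultimately show ?thesis by (simp add: distrib_left algebra_simps)
    qed
    finally show ?case .
  qed
  define B where "B n = norm (x (Suc n) - x n)" for n
  have Brec: "B n \<le> (1 - \<alpha> n) * B (n - 1) + real M * (KK * \<Phi> n)" if n2: "n \<ge> 2" for n
  proof -
    have n1: "n \<ge> 1" "n - 1 \<ge> 1" using n2 by auto
    have e: "Suc (Suc (M - 1)) = Suc M" "real (Suc (M - 1)) = real M" using M by auto
    have "x (Suc n) = w (Suc M) n" using x_step[OF n1(1)] .
    moreover have "x n = w (Suc M) (n - 1)" using x_step[OF n1(2)] n1 by simp
    moreover have "x n = w 1 n" using w_first[OF n1(1)] by simp
    moreover have "x (n - 1) = w 1 (n - 1)" using w_first[OF n1(2)] by simp
    ultimately show ?thesis using eiter[of "M - 1" n] n2 M unfolding B_def e by simp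
  qed
  have B0: "B n \<ge> 0" for n by (simp add: B_def)
  define KB where "KB = 2 * KW"
  have BKB: "B n \<le> KB" if "n \<ge> 1" for n
  proof -
    have "x (Suc n) = w (Suc M) n" using x_step[OF that] .
    moreover have "x n = w 1 n" using w_first[OF that] by simp
    ultimately have "B n = norm (w (Suc M) n - w 1 n)" by (simp add: B_def)
    also have "\<dots> \<le> norm (w (Suc M) n) + norm (w 1 n)" by (rule norm_triangle_ineq4)
    also have "\<dots> \<le> KW + KW" using KW[of "Suc M" n] KW[of 1 n] by (intro add_mono) auto
    finally show ?thesis by (simp add: KB_def)
  qed
  define Gf where "Gf m = (KB * \<bar>1 / lam m - 1 / lam (m - 1)\<bar> + real M * (KK * \<Phi> m) / lam m) / \<alpha> m" for m
  define c where "c p = B (Suc p) / lam (Suc p)" for p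
  have c0: "c p \<ge> 0" for p using B0[of "Suc p"] lampos[of "Suc p"] by (simp add: c_def)
  have crec: "c (Suc p) \<le> (1 - \<alpha> (Suc (Suc p))) * c p + \<alpha> (Suc (Suc p)) * Gf (Suc (Suc p))" for p
  proof -
    define m where "m = Suc (Suc p)"
    have m2: "m \<ge> 2" by (simp add: m_def)
    have lm: "lam m > 0" "lam (m - 1) > 0" using lampos m2 by auto
    have a: "0 < \<alpha> m" "\<alpha> m \<le> 1" using rng_\<alpha>[of m] m2 by auto
    have cn: "c p = B (m - 1) / lam (m - 1)" by (simp add: c_def m_def)
    have "c (Suc p) = B m / lam m" by (simp add: c_def m_def)
    also have "\<dots> \<le> ((1 - \<alpha> m) * B (m - 1) + real M * (KK * \<Phi> m)) / lam m"
      using Brec[OF m2] lm by (simp add: divide_right_mono)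
    also have "\<dots> = (1 - \<alpha> m) * (B (m - 1) / lam m) + real M * (KK * \<Phi> m) / lam m"
      by (simp add: add_divide_distrib)
    also have "B (m - 1) / lam m = c p + B (m - 1) * (1 / lam m - 1 / lam (m - 1))"
      using lm by (simp add: cn field_simps)
    also have "(1 - \<alpha> m) * (c p + B (m - 1) * (1 / lam m - 1 / lam (m - 1)))
        \<le> (1 - \<alpha> m) * c p + KB * \<bar>1 / lam m - 1 / lam (m - 1)\<bar>"
    proof -
      have "B (m - 1) * (1 / lam m - 1 / lam (m - 1)) \<le> KB * \<bar>1 / lam m - 1 / lam (m - 1)\<bar>"
      proof -
        have "B (m - 1) * (1 / lam m - 1 / lam (m - 1)) \<le> B (m - 1) * \<bar>1 / lam m - 1 / lam (m - 1)\<bar>"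
          by (rule mult_left_mono[OF abs_ge_self B0])
        also have "\<dots> \<le> KB * \<bar>1 / lam m - 1 / lam (m - 1)\<bar>"
          by (rule mult_right_mono[OF BKB abs_ge_zero]) (use m2 in simp)
        finally show ?thesis .
      qed
      moreover have "0 \<le> KB * \<bar>1 / lam m - 1 / lam (m - 1)\<bar>" using KW0 by (simp add: KB_def)
      ultimately have "(1 - \<alpha> m) * (B (m - 1) * (1 / lam m - 1 / lam (m - 1))) \<le> KB * \<bar>1 / lam m - 1 / lam (m - 1)\<bar>"
      proof -
        have "(1 - \<alpha> m) * (B (m - 1) * (1 / lam m - 1 / lam (m - 1))) \<le> (1 - \<alpha> m) * (KB * \<bar>1 / lam m - 1 / lam (m - 1)\<bar>)"
          using a \<open>B (m - 1) * (1 / lam m - 1 / lam (m - 1)) \<le> KB * \<bar>1 / lam m - 1 / lam (m - 1)\<bar>\<close> by (intro mult_left_mono) auto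
        also have "\<dots> \<le> KB * \<bar>1 / lam m - 1 / lam (m - 1)\<bar>"
          using a \<open>0 \<le> KB * \<bar>1 / lam m - 1 / lam (m - 1)\<bar>\<close> by (intro mult_left_le_one_le) auto
        finally show ?thesis .
      qed
      then show ?thesis by (simp add: distrib_left)
    qed
    also have "(1 - \<alpha> m) * c p + KB * \<bar>1 / lam m - 1 / lam (m - 1)\<bar> + real M * (KK * \<Phi> m) / lam m
        = (1 - \<alpha> m) * c p + \<alpha> m * Gf m"
      using a by (simp add: Gf_def)
    finally show ?thesis by (simp add: m_def add_right_mono)
  qed
  obtain \<sigma> where \<sigma>: "\<sigma> \<ge> 1" "\<And>n. n \<ge> 1 \<Longrightarrow> lam n / lam (Suc n) \<le> \<sigma>" using C6 by blast
  define T1 where "T1 p = (1 / \<alpha> (Suc p)) * \<bar>1 / lam (Suc p) - 1 / lam p\<bar>" for p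
  define C3t where "C3t p = (1 / lam (Suc p)) * \<bar>1 - \<alpha> p / \<alpha> (Suc p)\<bar>" for p
  define C5t where "C5t p = \<theta> p / (\<alpha> (Suc p) * lam (Suc p))" for p
  define C7t where "C7t p = \<beta> p / \<alpha> (Suc p)" for p
  define Ub where "Ub p = KB * T1 p + real M * KK * (C3t p + \<sigma> * T1 p + 2 * C5t p + lam p * T1 p + \<sigma> * C7t p)" for p
  have GfUb: "0 \<le> Gf (Suc p) \<and> Gf (Suc p) \<le> Ub p" if p1: "p \<ge> 1" for p
  proof -
    have l1: "lam (Suc p) > 0" and l0: "lam p > 0" using lampos p1 by auto
    have a1: "\<alpha> (Suc p) > 0" using rng_\<alpha>[of "Suc p"] by simp
    have sp: "Suc p - 1 = p" by simp
    define D where "D = lam (Suc p) * \<alpha> (Suc p)"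
    have D: "D > 0" using l1 a1 by (simp add: D_def)
    have T10: "T1 p \<ge> 0" using a1 by (simp add: T1_def)
    have rs: "lam p / lam (Suc p) \<le> \<sigma>" using \<sigma>(2)[OF p1] .
    have Phi: "\<Phi> (Suc p) = \<bar>\<alpha> (Suc p) - \<alpha> p\<bar> + \<bar>lam p / lam (Suc p) - 1\<bar> + \<theta> (Suc p) + \<theta> p
        + \<bar>lam (Suc p) - lam p\<bar> + lam p * \<beta> p" by (simp add: \<Phi>_def)
    have Gfe: "Gf (Suc p) = KB * T1 p + real M * KK * (\<Phi> (Suc p) / D)"
      using l1 a1 by (simp add: Gf_def T1_def D_def field_simps)
    have v1: "\<bar>\<alpha> (Suc p) - \<alpha> p\<bar> / D = C3t p" unfolding D_def C3t_def by (rule u1[OF l1 a1])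
    have v2: "\<bar>lam p / lam (Suc p) - 1\<bar> / D \<le> \<sigma> * T1 p"
    proof -
      have "\<bar>lam p / lam (Suc p) - 1\<bar> / D = (lam p / lam (Suc p)) * T1 p"
        unfolding D_def T1_def by (rule u2[OF l1 l0 a1])
      also have "\<dots> \<le> \<sigma> * T1 p" by (rule mult_right_mono[OF rs T10])
      finally show ?thesis .
    qed
    have v3: "\<theta> (Suc p) / D \<le> C5t p"
    proof -
      have "\<theta> (Suc p) \<le> \<theta> p" using dec_\<theta>[OF p1] .
      then have "\<theta> (Suc p) / D \<le> \<theta> p / D" using D by (simp add: divide_right_mono)
      then show ?thesis by (simp add: C5t_def D_def mult.commute)
    qed
    have v4: "\<theta> p / D = C5t p" by (simp add: C5t_def D_def mult.commute)
    have v5: "\<bar>lam (Suc p) - lam p\<bar> / D = lam p * T1 p"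
      unfolding D_def T1_def by (rule u5[OF l1 l0 a1])
    have v6: "lam p * \<beta> p / D \<le> \<sigma> * C7t p"
    proof -
      have "lam p * \<beta> p / D = (lam p / lam (Suc p)) * C7t p" unfolding D_def C7t_def by (rule u6)
      also have "\<dots> \<le> \<sigma> * C7t p" using rng_\<beta>[OF p1] a1 by (intro mult_right_mono[OF rs]) (simp add: C7t_def)
      finally show ?thesis .
    qed
    have "\<Phi> (Suc p) / D = \<bar>\<alpha> (Suc p) - \<alpha> p\<bar> / D + \<bar>lam p / lam (Suc p) - 1\<bar> / D + \<theta> (Suc p) / D + \<theta> p / D
        + \<bar>lam (Suc p) - lam p\<bar> / D + lam p * \<beta> p / D"
      unfolding Phi by (simp add: add_divide_distrib)
    also have "\<dots> \<le> C3t p + \<sigma> * T1 p + C5t p + C5t p + lam p * T1 p + \<sigma> * C7t p"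
      using v1 v2 v3 v4 v5 v6 by linarith
    finally have PD: "\<Phi> (Suc p) / D \<le> C3t p + \<sigma> * T1 p + 2 * C5t p + lam p * T1 p + \<sigma> * C7t p" by simp
    have PD0: "\<Phi> (Suc p) / D \<ge> 0" using Phi0[of "Suc p"] p1 D by simp
    have MK0: "real M * KK \<ge> 0" using KKge(6) by simp
    have "real M * KK * (\<Phi> (Suc p) / D) \<le> real M * KK * (C3t p + \<sigma> * T1 p + 2 * C5t p + lam p * T1 p + \<sigma> * C7t p)"
      by (rule mult_left_mono[OF PD MK0])
    then have up: "Gf (Suc p) \<le> Ub p" unfolding Gfe Ub_def by linarith
    have "0 \<le> KB * T1 p" using KW0 T10 by (simp add: KB_def)
    moreover have "0 \<le> real M * KK * (\<Phi> (Suc p) / D)" by (rule mult_nonneg_nonneg[OF MK0 PD0])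
    ultimately have "0 \<le> Gf (Suc p)" unfolding Gfe by linarith
    then show ?thesis using up by simp
  qed
  have T1lim: "T1 \<longlonglongrightarrow> 0" using C2 by (simp add: T1_def[abs_def])
  have C3l: "C3t \<longlonglongrightarrow> 0" using C3 by (simp add: C3t_def[abs_def])
  have C5l: "C5t \<longlonglongrightarrow> 0" using C5 by (simp add: C5t_def[abs_def])
  have C7l: "C7t \<longlonglongrightarrow> 0" using C7 by (simp add: C7t_def[abs_def])
  have Ublim: "Ub \<longlonglongrightarrow> KB * 0 + real M * KK * (0 + \<sigma> * 0 + 2 * 0 + 0 * 0 + \<sigma> * 0)"
    unfolding Ub_def[abs_def] by (intro tendsto_intros T1lim lim_lam C3l C5l C7l)
  have GfS: "(\<lambda>p. Gf (Suc p)) \<longlonglongrightarrow> 0"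
  proof (rule tendsto_sandwich[of "\<lambda>_. 0" _ _ Ub])
    show "\<forall>\<^sub>F p in sequentially. 0 \<le> Gf (Suc p)"
      using GfUb by (intro eventually_sequentiallyI[of 1]) auto
    show "\<forall>\<^sub>F p in sequentially. Gf (Suc p) \<le> Ub p"
      using GfUb by (intro eventually_sequentiallyI[of 1]) auto
    show "(\<lambda>_. 0) \<longlonglongrightarrow> (0::real)" by simp
    show "Ub \<longlonglongrightarrow> 0" using Ublim by simp
  qed
  have GfSS: "(\<lambda>p. Gf (Suc (Suc p))) \<longlonglongrightarrow> 0" using LIMSEQ_Suc[OF GfS] .
  have clim: "c \<longlonglongrightarrow> 0"
  proof (rule xu[of 0 "\<lambda>p. \<alpha> (Suc (Suc p))"])
    show "0 < \<alpha> (Suc (Suc n)) \<and> \<alpha> (Suc (Suc n)) \<le> 1" for n using rng_\<alpha>[of "Suc (Suc n)"] by simp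
    show "\<not> summable (\<lambda>p. \<alpha> (Suc (Suc p)))" using C1 summable_Suc_iff[of "\<lambda>p. \<alpha> (Suc p)"] summable_Suc_iff[of \<alpha>] by simp
    show "(\<lambda>p. Gf (Suc (Suc p))) \<longlonglongrightarrow> 0" by (rule GfSS)
    show "c n \<ge> 0" for n by (rule c0)
    show "c (Suc n) \<le> (1 - \<alpha> (Suc (Suc n))) * c n + \<alpha> (Suc (Suc n)) * Gf (Suc (Suc n))" for n by (rule crec)
  qed
  have lim1: "(\<lambda>n. norm (x (Suc n) - x n) / lam n) \<longlonglongrightarrow> 0"
  proof -
    have "(\<lambda>n. B (Suc n) / lam (Suc n)) \<longlonglongrightarrow> 0" using clim by (simp add: c_def[abs_def])
    then have "(\<lambda>n. B n / lam n) \<longlonglongrightarrow> 0" by (rule LIMSEQ_imp_Suc)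
    then show ?thesis by (simp add: B_def[abs_def])
  qed
  have lim2: "(\<lambda>n. norm (x (Suc n) - x n)) \<longlonglongrightarrow> 0"
  proof -
    have "(\<lambda>n. c n * lam (Suc n)) \<longlonglongrightarrow> 0 * 0" by (intro tendsto_mult clim LIMSEQ_Suc[OF lim_lam])
    moreover have "c n * lam (Suc n) = B (Suc n)" for n using lampos[of "Suc n"] by (simp add: c_def)
    ultimately have "(\<lambda>n. B (Suc n)) \<longlonglongrightarrow> 0" by simp
    then have "B \<longlonglongrightarrow> 0" by (rule LIMSEQ_imp_Suc)
    then show ?thesis by (simp add: B_def[abs_def])
  qed
  show ?thesis using lim1 lim2 partb by blast
qed


end
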